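(* Let $d\in\mathbb{N}$, $\mu_0,\ldots,\mu_d\in\mathbb{R}\setminus\{0\}$, $S_+=\{z\in\mathbb{C}:\operatorname{Im}z\ge0\}\setminus\{-\mu_0^{-2},\ldots,-\mu_d^{-2}\}$, $\omega=1-i$, and use the branch $\sqrt{re^{i\theta}}=\sqrt re^{i\theta/2}$ for $r\ge0$, $\theta\in[0,\pi]$. (a) For every $z\in S_+$ the limit $$I(z):=\lim_{B\to+\infty}\int_0^B\prod_{j=0}^d\Phi(\mu_j\sqrt z\,\omega y)\,e^{-\omega^2y^2/2}\omega\,dy=\int_0^{\omega\infty}\prod_{j=0}^d\Phi(\mu_j\sqrt z\,x)e^{-x^2/2}dx$$ exists and is finite, and for every $A>0$, \begin{align*} I(z)=&\int_0^A\prod_{j}\Phi(\mu_j\sqrt z\,\omega y)e^{-\omega^2y^2/2}\omega\,dy+\frac{1}{A\omega}\prod_j\Phi(\mu_j\sqrt z\,\omega A)e^{-\omega^2A^2/2} -\frac{1}{2\omega}\int_{A^2}^\infty\prod_j\Phi(\mu_j\sqrt z\,\omega\sqrt x)\frac{e^{-\omega^2x/2}}{x^{3/2}}dx\\ &+\sum_{\ell=0}^d\frac{\mu_\ell\sqrt z}{\sqrt{2\pi}\omega^2(1+\mu_\ell^2z)}\prod_{j\ne\ell}\Phi(\mu_j\sqrt z\,\omega A)\frac{1}{A^2}e^{-\frac{\omega^2A^2}{2}(1+\mu_\ell^2z)}\\ &-\sum_{\ell=0}^d\frac{\mu_\ell\sqrt z}{\sqrt{2\pi}\omega^2(1+\mu_\ell^2z)}\int_{A^2}^\infty\prod_{j\ne\ell}\Phi(\mu_j\sqrt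 z\,\omega\sqrt x)\frac{1}{x^2}e^{-\frac{\omega^2x}{2}(1+\mu_\ell^2z)}dx\\ &+\sum_{0\le\ell_1\ne\ell_2\le d}\frac{\mu_{\ell_1}\mu_{\ell_2}z}{4\pi\omega(1+\mu_{\ell_1}^2z)}\int_{A^2}^\infty\prod_{j\notin\{\ell_1,\ell_2\}}\Phi(\mu_j\sqrt z\,\omega\sqrt x)\frac{1}{x^{3/2}}e^{-\frac{\omega^2x}{2}(1+\mu_{\ell_1}^2z+\mu_{\ell_2}^2z)}dx, \end{align*} where all integrals over $[A^2,\infty)$ converge absolutely. (b) The function $z\mapsto I(z)$ is continuous on $S_+$ and analytic on the open upper half-plane $\{\operatorname{Im}z>0\}$.
   Context: $\Phi(z)=\frac12+\frac{1}{\sqrt{2\pi}}\int_0^ze^{-x^2/2}dx$ for $z\in\mathbb{C}$. For $\omega\ne0$, $\int_0^{\omega\infty}f(x)dx:=\lim_{B\to+\infty}\int_0^Bf(\omega y)\omega\,dy$. Products over $j$ range over $j\in\{0,\ldots,d\}$ (minus the excluded indices); $\sqrt x>0$ for $x>0$. *)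

theory Defs
  imports "HOL-Complex_Analysis.Complex_Analysis"
begin

definition Phi :: "complex \<Rightarrow> complex" where
  "Phi z = 1/2 + (1 / complex_of_real (sqrt (2*pi))) *
            contour_integral (linepath 0 z) (\<lambda>x. exp (- (x^2) / 2))"

definition omega :: complex where
  "omega = 1 - \<i>"

text \<open>The square root is the principal branch csqrt,
  which on the closed upper half-plane is the branch sqrt(r e^{i theta}) = sqrt r e^{i theta/2},
  theta in [0,pi].\<close>
definition PhiProd :: "nat \<Rightarrow> (nat \<Rightarrow> real) \<Rightarrow> nat set \<Rightarrow> complex \<Rightarrow> real \<Rightarrow> complex" where
  "PhiProd d \<mu> J z t =
     (\<Prod>j\<in>{0..d} - J. Phi (complex_of_real (\<mu> j) * csqrt z * omega * complex_of_real t))"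

definition Iintegrand :: "nat \<Rightarrow> (nat \<Rightarrow> real) \<Rightarrow> complex \<Rightarrow> real \<Rightarrow> complex" where
  "Iintegrand d \<mu> z y =
     PhiProd d \<mu> {} z y * exp (- (omega^2 * complex_of_real (y^2)) / 2) * omega"

definition Ifun :: "nat \<Rightarrow> (nat \<Rightarrow> real) \<Rightarrow> complex \<Rightarrow> complex" where
  "Ifun d \<mu> z = Lim at_top (\<lambda>B. integral {0..B} (Iintegrand d \<mu> z))"

end

theory Submission
  imports Defs
begin

definition Psi :: "complex \<Rightarrow> complex" where
  "Psi w = contour_integral (linepath 0 w) (\<lambda>x. exp (- (x^2) / 2))"

lemma Psi_deriv: "(Psi has_field_derivative exp (- (w^2) / 2)) (at w)"
proof -
  obtain G :: "complex \<Rightarrow> complex" where G: "\<And>x. x \<in> UNIV \<Longrightarrow> (G has_field_derivative exp (- (x^2) / 2)) (at x within UNIV)"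
    by (rule holomorphic_convex_primitive'[of UNIV "\<lambda>x. exp (- (x^2) / 2)"]) (auto intro!: holomorphic_intros)
  have eq: "Psi = (\<lambda>w. G w - G 0)"
  proof
    fix w
    have "((\<lambda>x. exp (- (x^2) / 2)) has_contour_integral (G w - G 0)) (linepath 0 w)"
      using contour_integral_primitive[of UNIV G "\<lambda>x. exp (- (x^2) / 2)" "linepath 0 w"] G by auto
    then show "Psi w = G w - G 0" unfolding Psi_def by (rule contour_integral_unique)
  qed
  show ?thesis unfolding eq using G[of w] by (auto intro!: derivative_eq_intros)
qed

lemma Psi_0 [simp]: "Psi 0 = 0"
  by (simp add: Psi_def)

lemma Psi_neg: "Psi (- w) = - Psi w"
proof -
  have "\<exists>c. \<forall>x\<in>UNIV. Psi x + Psi (-x) = c"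
    by (rule has_field_derivative_zero_constant)
       (auto intro!: derivative_eq_intros Psi_deriv[THEN DERIV_chain2])
  then obtain c where c: "\<And>x. Psi x + Psi (-x) = c" by auto
  from c[of 0] c[of w] show ?thesis by (simp add: algebra_simps eq_neg_iff_add_eq_0)
qed

lemma Phi_Psi: "Phi w = 1/2 + Psi w / complex_of_real (sqrt (2*pi))"
  by (simp add: Phi_def Psi_def)

lemma Psi_deriv_chain [derivative_intros]:
  "(g has_field_derivative g') (at x within s) \<Longrightarrow>
   ((\<lambda>x. Psi (g x)) has_field_derivative exp (- ((g x)^2) / 2) * g') (at x within s)"
  by (rule DERIV_chain2[OF Psi_deriv])

lemma deriv_bound:
  fixes v :: "real \<Rightarrow> complex" and u :: "real \<Rightarrow> real"
  assumes "a \<le> b"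
    and v: "\<And>x. x \<in> {a..b} \<Longrightarrow> (v has_vector_derivative v' x) (at x within {a..b})"
    and u: "\<And>x. x \<in> {a..b} \<Longrightarrow> (u has_real_derivative u' x) (at x within {a..b})"
    and le: "\<And>x. x \<in> {a..b} \<Longrightarrow> norm (v' x) \<le> u' x"
  shows "norm (v b - v a) \<le> u b - u a"
proof -
  have iv: "(v' has_integral (v b - v a)) {a..b}"
    by (rule fundamental_theorem_of_calculus[OF assms(1) v])
  have iu: "(u' has_integral (u b - u a)) {a..b}"
    by (rule fundamental_theorem_of_calculus[OF assms(1)])
       (use u in \<open>auto simp: has_real_derivative_iff_has_vector_derivative\<close>)
  have "norm (integral {a..b} v') \<le> integral {a..b} u'"
    by (rule integral_norm_bound_integral) (use iv iu le in auto)
  then show ?thesis using iv iu by (simp add: integral_unique)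
qed

lemma norm_exp_minus_sq_half: "norm (exp (- (w^2) / 2)) = exp ((Im w ^ 2 - Re w ^ 2) / 2)"
  by (simp add: power2_eq_square field_simps)

lemma Psi_real_bound:
  assumes "a \<ge> 0"
  shows "norm (Psi (complex_of_real a)) \<le> 2"
proof -
  have "norm (Psi (of_real (1*a)) - Psi (of_real (0*a))) \<le> (- exp (1/2 - 1*a)) - (- exp (1/2 - 0*a))"
  proof (rule deriv_bound[where v = "\<lambda>t. Psi (of_real (t*a))" and u = "\<lambda>t. - exp (1/2 - t*a)"
        and v' = "\<lambda>t. exp (- ((complex_of_real (t*a))^2) / 2) * of_real a" and u' = "\<lambda>t. a * exp (1/2 - t*a)"])
    fix t :: real assume t: "t \<in> {0..1}"
    show "((\<lambda>t. Psi (of_real (t*a))) has_vector_derivative exp (- ((of_real (t*a))^2) / 2) * of_real a) (at t within {0..1})"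
    proof -
      have "((\<lambda>t. Psi (of_real t * of_real a)) has_vector_derivative exp (- ((of_real t * of_real a)^2) / 2) * of_real a) (at t within {0..1})"
        by (rule has_vector_derivative_real_field) (auto intro!: derivative_eq_intros)
      then show ?thesis by simp
    qed
    show "((\<lambda>t. - exp (1/2 - t*a)) has_real_derivative a * exp (1/2 - t*a)) (at t within {0..1})"
      by (auto intro!: derivative_eq_intros)
    have "-((t*a)^2)/2 \<le> 1/2 - t*a"
    proof -
      have "0 \<le> (t*a - 1)^2" by simp
      moreover have "(t*a - 1)^2 = (t*a)^2 - 2*(t*a) + 1" by (simp add: power2_diff)
      ultimately show ?thesis by linarith
    qed
    then have "exp (-((t*a)^2)/2) \<le> exp (1/2 - t*a)" by simp
    moreover have "norm (exp (- ((complex_of_real (t*a))^2) / 2)) = exp (-((t*a)^2)/2)"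
      by (subst norm_exp_minus_sq_half) simp
    ultimately show "norm (exp (- ((complex_of_real (t*a))^2) / 2) * of_real a) \<le> a * exp (1/2 - t*a)"
      using assms by (simp add: norm_mult mult.commute mult_left_mono)
  qed simp
  also have "\<dots> \<le> 2"
  proof -
    have "exp (1/2::real) \<le> 2"
    proof -
      have "exp (1/2::real) * exp (1/2) = exp 1" by (simp add: exp_add[symmetric])
      with exp_le have that: "exp (1/2::real) * exp (1/2) \<le> 2 * 2" by simp
      show ?thesis
      proof (rule power2_le_imp_le)
        show "(exp (1/2::real))^2 \<le> 2^2" using that by (simp only: power2_eq_square)
      qed simp
    qed
    then show ?thesis by (smt (verit) exp_gt_zero)
  qed
  finally show ?thesis by simp
qed

lemma Psi_vert_bound:
  assumes "\<bar>b\<bar> \<le> a"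
  shows "norm (Psi (Complex a b) - Psi (complex_of_real a)) \<le> 2"
proof -
  define v where "v = (\<lambda>t::real. Psi (complex_of_real a + \<i> * complex_of_real (t*b)))"
  define v' where "v' = (\<lambda>t::real. exp (- ((complex_of_real a + \<i> * complex_of_real (t*b))^2) / 2) * (\<i> * of_real b))"
  have vd: "(v has_vector_derivative v' t) (at t within {0..1})" for t
  proof -
    have "((\<lambda>t. Psi (complex_of_real a + \<i> * (of_real t * of_real b))) has_vector_derivative
            exp (- ((complex_of_real a + \<i> * (of_real t * of_real b))^2) / 2) * (\<i> * of_real b)) (at t within {0..1})"
      by (rule has_vector_derivative_real_field) (auto intro!: derivative_eq_intros)
    then show ?thesis by (simp add: v_def v'_def)
  qed
  have nv': "norm (v' t) = \<bar>b\<bar> * exp (((t*b)^2 - a^2)/2)" for t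
    unfolding v'_def norm_mult by (subst norm_exp_minus_sq_half) (simp add: power2_eq_square)
  have eqv: "v 1 - v 0 = Psi (Complex a b) - Psi (complex_of_real a)"
  proof -
    have "complex_of_real a + \<i> * complex_of_real b = Complex a b" by (simp add: complex_eq_iff)
    then show ?thesis by (simp add: v_def)
  qed
  have a0: "a \<ge> 0" using assms by linarith
  have sq: "(t*b)^2 \<le> a^2" if "t \<in> {0..1}" for t
  proof -
    have "\<bar>t*b\<bar> \<le> a" using that assms by (auto simp: abs_mult intro: order_trans[OF mult_left_le_one_le])
    then show ?thesis using a0 by (metis abs_le_square_iff abs_of_nonneg)
  qed
  show ?thesis
  proof (cases "a \<le> 1")
    case True
    have "norm (v 1 - v 0) \<le> 1 - 0"
    proof (rule deriv_bound[where u = "\<lambda>t. t" and u' = "\<lambda>t. 1"])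
      fix t :: real assume t: "t \<in> {0..1}"
      show "(v has_vector_derivative v' t) (at t within {0..1})" by (rule vd)
      show "((\<lambda>t. t) has_real_derivative 1) (at t within {0..1})" by (auto intro!: derivative_eq_intros)
      have "exp (((t*b)^2 - a^2)/2) \<le> 1" using sq[OF t] by simp
      moreover have "\<bar>b\<bar> \<le> 1" using assms True by linarith
      ultimately show "norm (v' t) \<le> 1" unfolding nv' by (simp add: mult_le_one)
    qed simp
    then show ?thesis using eqv by simp
  next
    case False
    then have apos: "a > 0" by simp
    have "norm (v 1 - v 0) \<le> (2/a) * exp (a*(1*\<bar>b\<bar> - a)/2) - (2/a) * exp (a*(0*\<bar>b\<bar> - a)/2)"
    proof (rule deriv_bound[where u = "\<lambda>t. (2/a) * exp (a*(t*\<bar>b\<bar> - a)/2)" and u' = "\<lambda>t. \<bar>b\<bar> * exp (a*(t*\<bar>b\<bar> - a)/2)"])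
      fix t :: real assume t: "t \<in> {0..1}"
      show "(v has_vector_derivative v' t) (at t within {0..1})" by (rule vd)
      show "((\<lambda>t. (2/a) * exp (a*(t*\<bar>b\<bar> - a)/2)) has_real_derivative \<bar>b\<bar> * exp (a*(t*\<bar>b\<bar> - a)/2)) (at t within {0..1})"
        using apos by (auto intro!: derivative_eq_intros simp: field_simps)
      have tb: "t*\<bar>b\<bar> \<le> a" "0 \<le> t*\<bar>b\<bar>" using t assms by (auto intro: order_trans[OF mult_left_le_one_le])
      have "(t*b)^2 = (t*\<bar>b\<bar>) * (t*\<bar>b\<bar>)" by (simp add: power2_eq_square abs_mult_self_eq)
      also have "\<dots> \<le> a * (t*\<bar>b\<bar>)" using tb by (intro mult_right_mono) auto
      finally have "((t*b)^2 - a^2)/2 \<le> a*(t*\<bar>b\<bar> - a)/2" by (simp add: power2_eq_square field_simps)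
      then show "norm (v' t) \<le> \<bar>b\<bar> * exp (a*(t*\<bar>b\<bar> - a)/2)" unfolding nv'
        by (intro mult_left_mono) auto
    qed simp
    also have "\<dots> \<le> (2/a) * exp (a*(1*\<bar>b\<bar> - a)/2)" using apos by simp
    also have "\<dots> \<le> (2/a) * 1"
      using apos assms by (intro mult_left_mono) (auto simp: mult_nonpos_nonneg mult_nonneg_nonpos)
    also have "\<dots> \<le> 2" using False by (simp add: field_simps)
    finally show ?thesis using eqv by simp
  qed
qed

lemma Psi_bound_pos:
  assumes "\<bar>Im w\<bar> \<le> Re w"
  shows "norm (Psi w) \<le> 4"
proof -
  have "norm (Psi w) \<le> norm (Psi (Complex (Re w) (Im w)) - Psi (complex_of_real (Re w))) + norm (Psi (complex_of_real (Re w)))"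
    by (metis complex_surj norm_triangle_sub add.commute)
  also have "\<dots> \<le> 2 + 2"
    using Psi_vert_bound[OF assms] Psi_real_bound[of "Re w"] assms by (intro add_mono) auto
  finally show ?thesis by simp
qed

lemma Psi_bound:
  assumes "\<bar>Im w\<bar> \<le> \<bar>Re w\<bar>"
  shows "norm (Psi w) \<le> 4"
proof (cases "Re w \<ge> 0")
  case True then show ?thesis using assms Psi_bound_pos by auto
next
  case False
  then have "norm (Psi (-w)) \<le> 4" using assms by (intro Psi_bound_pos) auto
  then show ?thesis by (simp add: Psi_neg)
qed

lemma Phi_bound:
  assumes "\<bar>Im w\<bar> \<le> \<bar>Re w\<bar>"
  shows "norm (Phi w) \<le> 5"
proof -
  have s: "sqrt (2*pi) \<ge> 1" using pi_gt3 by simp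
  have "norm (Phi w) \<le> 1/2 + norm (Psi w) / sqrt (2*pi)"
    unfolding Phi_Psi by (rule order_trans[OF norm_triangle_ineq]) (simp add: norm_divide)
  also have "norm (Psi w) / sqrt (2*pi) \<le> norm (Psi w)"
    using s by (simp add: divide_le_eq mult_le_cancel_left1)
  finally show ?thesis using Psi_bound[OF assms] by simp
qed

lemma Re_csqrt_nonneg: "Re (csqrt z) \<ge> 0"
  using abs_Re_le_cmod[of z] by simp

lemma Im_csqrt_nonneg: "Im z \<ge> 0 \<Longrightarrow> Im (csqrt z) \<ge> 0"
  using abs_Re_le_cmod[of z] by (auto simp: sgn_if)

lemma omega_sq: "omega^2 = - 2 * \<i>"
  by (simp add: omega_def power2_eq_square algebra_simps)

lemma omega_nz [simp]: "omega \<noteq> 0"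
  by (simp add: omega_def complex_eq_iff)

lemma sector:
  assumes "Im z \<ge> 0"
  shows "\<bar>Im (complex_of_real m * csqrt z * omega * complex_of_real t)\<bar>
       \<le> \<bar>Re (complex_of_real m * csqrt z * omega * complex_of_real t)\<bar>"
proof -
  define p where "p = Re (csqrt z)"
  define q where "q = Im (csqrt z)"
  have p: "p \<ge> 0" and q: "q \<ge> 0" using Im_csqrt_nonneg[OF assms] Re_csqrt_nonneg[of z] by (auto simp: p_def q_def simp del: csqrt.sel)
  have re: "Re (complex_of_real m * csqrt z * omega * complex_of_real t) = m * t * (p + q)"
    by (simp add: omega_def p_def q_def algebra_simps del: csqrt.sel)
  have im: "Im (complex_of_real m * csqrt z * omega * complex_of_real t) = m * t * (q - p)"
    by (simp add: omega_def p_def q_def algebra_simps del: csqrt.sel)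
  have "\<bar>q - p\<bar> \<le> \<bar>p + q\<bar>" using p q by linarith
  then show ?thesis unfolding re im abs_mult by (intro mult_left_mono) auto
qed

lemma PhiProd_bound:
  assumes "Im z \<ge> 0"
  shows "norm (PhiProd d \<mu> J z t) \<le> 5 ^ (d+1)"
proof -
  have "norm (PhiProd d \<mu> J z t) = (\<Prod>j\<in>{0..d} - J. norm (Phi (complex_of_real (\<mu> j) * csqrt z * omega * complex_of_real t)))"
    by (simp add: PhiProd_def prod_norm)
  also have "\<dots> \<le> 5 ^ (d+1)"
  proof (rule prod_le_power)
    show "card ({0..d} - J) \<le> d + 1"
    proof -
      have "card ({0..d} - J) \<le> card {0..d}" by (intro card_mono) auto
      then show ?thesis by simp
    qed
  qed (auto intro!: Phi_bound sector assms)
  finally show ?thesis .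
qed

definition phi :: "complex \<Rightarrow> complex" where
  "phi w = exp (- (w^2) / 2) / complex_of_real (sqrt (2*pi))"

lemma Phi_deriv: "(Phi has_field_derivative phi w) (at w)"
  unfolding Phi_Psi[abs_def] phi_def
  by (auto intro!: derivative_eq_intros)

lemma Phi_deriv_chain [derivative_intros]:
  "(g has_field_derivative g') (at x within s) \<Longrightarrow>
   ((\<lambda>x. Phi (g x)) has_field_derivative phi (g x) * g') (at x within s)"
  by (rule DERIV_chain2[OF Phi_deriv])

lemma continuous_Phi [continuous_intros]: "continuous_on S Phi"
  by (meson DERIV_continuous Phi_deriv continuous_at_imp_continuous_on)

lemma continuous_Phi' [continuous_intros]: "continuous_on S f \<Longrightarrow> continuous_on S (\<lambda>x. Phi (f x))"
  by (rule continuous_on_compose2[OF continuous_Phi]) auto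

lemma norm_E0: "norm (exp (- (omega^2 * complex_of_real x) / 2)) = 1"
  by (simp add: omega_sq)

lemma norm_E1:
  assumes "x \<ge> 0" "Im z \<ge> 0" "m \<ge> 0"
  shows "norm (exp (- (omega^2 * complex_of_real x / 2) * (1 + complex_of_real m * z))) \<le> 1"
proof -
  have "Re (- (omega^2 * complex_of_real x / 2) * (1 + complex_of_real m * z)) = - (x * m * Im z)"
    by (simp add: omega_sq algebra_simps)
  moreover have "x * m * Im z \<ge> 0" using assms by simp
  ultimately show ?thesis by simp
qed

lemma norm_E2:
  assumes "x \<ge> 0" "Im z \<ge> 0" "m1 \<ge> 0" "m2 \<ge> 0"
  shows "norm (exp (- (omega^2 * complex_of_real x / 2) * (1 + complex_of_real m1 * z + complex_of_real m2 * z))) \<le> 1"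
proof -
  have "Re (- (omega^2 * complex_of_real x / 2) * (1 + complex_of_real m1 * z + complex_of_real m2 * z)) = - (x * (m1 + m2) * Im z)"
    by (simp add: omega_sq algebra_simps)
  moreover have "x * (m1 + m2) * Im z \<ge> 0" using assms by simp
  ultimately show ?thesis by simp
qed

lemma csqrt_UHP:
  assumes "Im z \<ge> 0"
  shows "csqrt z = Complex (sqrt ((cmod z + Re z) / 2)) (sqrt ((cmod z - Re z) / 2))"
  using assms by (auto simp: complex_eq_iff sgn_if)

lemma continuous_on_csqrt_UHP: "continuous_on {z. Im z \<ge> 0} csqrt"
proof -
  have "continuous_on {z. Im z \<ge> 0} (\<lambda>z. Complex (sqrt ((cmod z + Re z) / 2)) (sqrt ((cmod z - Re z) / 2)))"
    unfolding Complex_eq by (intro continuous_intros) auto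
  then show ?thesis by (rule continuous_on_cong[THEN iffD1, rotated 2]) (auto simp: csqrt_UHP)
qed

context
  fixes d :: nat and \<mu> :: "nat \<Rightarrow> real" and z :: complex
begin

definition "aa j = complex_of_real (\<mu> j) * csqrt z * omega"
definition "Pc J w = (\<Prod>j\<in>{0..d} - J. Phi (aa j * w))"
definition "cc l = 1 + complex_of_real ((\<mu> l)^2) * z"
definition "E0c w = exp (- (omega^2 * w^2) / 2)"
definition "E1c l w = exp (- (omega^2 * w^2 / 2) * cc l)"
definition "E2c l1 l2 w = exp (- (omega^2 * w^2 / 2) * (1 + complex_of_real ((\<mu> l1)^2) * z + complex_of_real ((\<mu> l2)^2) * z))"
definition "k1 l = complex_of_real (\<mu> l) * csqrt z / (complex_of_real (sqrt (2*pi)) * omega^2 * cc l)"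
definition "k2 l1 l2 = complex_of_real (\<mu> l1 * \<mu> l2) * z / (complex_of_real (4 * pi) * omega * cc l1)"

lemma PhiProd_Pc: "PhiProd d \<mu> J z t = Pc J (complex_of_real t)"
  by (simp add: PhiProd_def Pc_def aa_def)

lemma Pc_deriv:
  "(Pc J has_field_derivative (\<Sum>l\<in>{0..d} - J. phi (aa l * w) * aa l * Pc (insert l J) w)) (at w)"
proof -
  have "((\<lambda>u. \<Prod>j\<in>{0..d} - J. Phi (aa j * u)) has_field_derivative
         (\<Sum>l\<in>{0..d} - J. phi (aa l * w) * aa l * (\<Prod>y\<in>{0..d} - J - {l}. Phi (aa y * w)))) (at w)"
    by (rule has_field_derivative_prod) (auto intro!: derivative_eq_intros)
  then show ?thesis unfolding Pc_def[abs_def] by (simp add: Diff_insert[symmetric])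
qed

lemma aa_sq: "(aa l * w)^2 = complex_of_real ((\<mu> l)^2) * z * omega^2 * w^2"
  by (simp add: aa_def power_mult_distrib)

lemma I1: "phi (aa l * w) * E0c w = E1c l w / complex_of_real (sqrt (2*pi))"
proof -
  have "- ((aa l * w)^2) / 2 + - (omega^2 * w^2) / 2 = - (omega^2 * w^2 / 2) * cc l"
    unfolding aa_sq cc_def by (simp add: algebra_simps)
  then show ?thesis unfolding phi_def E0c_def E1c_def
    by (simp add: exp_add[symmetric])
qed

lemma I2: "phi (aa l2 * w) * E1c l1 w = E2c l1 l2 w / complex_of_real (sqrt (2*pi))"
proof -
  have "- ((aa l2 * w)^2) / 2 + - (omega^2 * w^2 / 2) * cc l1 = 
     - (omega^2 * w^2 / 2) * (1 + complex_of_real ((\<mu> l1)^2) * z + complex_of_real ((\<mu> l2)^2) * z)"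
    unfolding aa_sq cc_def by (simp add: algebra_simps)
  then show ?thesis unfolding phi_def E2c_def E1c_def
    by (simp add: exp_add[symmetric])
qed

lemma E0c_deriv: "(E0c has_field_derivative (- (omega^2 * w) * E0c w)) (at w)"
  unfolding E0c_def[abs_def] by (auto intro!: derivative_eq_intros simp: algebra_simps)

lemma E1c_deriv: "(E1c l has_field_derivative (- (omega^2 * w * cc l) * E1c l w)) (at w)"
  unfolding E1c_def[abs_def] by (auto intro!: derivative_eq_intros simp: algebra_simps)

end

context
  fixes d :: nat and \<mu> :: "nat \<Rightarrow> real" and z :: complex
begin

abbreviation "aa' \<equiv> aa \<mu> z"
abbreviation "Pc' \<equiv> Pc d \<mu> z"
abbreviation "cc' \<equiv> cc \<mu> z"
abbreviation "E1c' \<equiv> E1c \<mu> z"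
abbreviation "E2c' \<equiv> E2c \<mu> z"
abbreviation "k1' \<equiv> k1 \<mu> z"
abbreviation "k2' \<equiv> k2 \<mu> z"

lemma sqrt2pi_sq: "complex_of_real (sqrt (2*pi)) * complex_of_real (sqrt (2*pi)) = complex_of_real (2*pi)"
  by (simp flip: of_real_mult)

lemma sqrt2pi_nz [simp]: "complex_of_real (sqrt (2*pi)) \<noteq> 0"
  using pi_gt_zero by simp

lemma k1_rel:
  assumes "cc' l \<noteq> 0"
  shows "aa' l / (omega * complex_of_real (sqrt (2*pi))) = k1' l * omega^2 * cc' l"
  using assms by (simp add: aa_def k1_def field_simps power2_eq_square)

lemma k2_rel:
  assumes "cc' l \<noteq> 0"
  shows "k1' l * aa' l2 / complex_of_real (sqrt (2*pi)) = 2 * k2' l l2"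
proof -
  have cz: "csqrt z * csqrt z = z" by (metis power2_csqrt power2_eq_square)
  have "k1' l * aa' l2 / complex_of_real (sqrt (2*pi))
      = complex_of_real (\<mu> l) * complex_of_real (\<mu> l2) * (csqrt z * csqrt z) * omega /
        ((complex_of_real (sqrt (2*pi)) * complex_of_real (sqrt (2*pi))) * omega^2 * cc' l)"
    by (simp add: aa_def k1_def field_simps)
  also have "\<dots> = complex_of_real (\<mu> l) * complex_of_real (\<mu> l2) * z * omega /
        (complex_of_real (2*pi) * omega^2 * cc' l)" unfolding cz sqrt2pi_sq ..
  also have "\<dots> = 2 * k2' l l2" using assms pi_gt_zero
    by (simp add: k2_def field_simps power2_eq_square)
  finally show ?thesis .
qed

definition "T2v l w = (\<Sum>l2\<in>{0..d} - {l}. 2 * k2' l l2 * Pc' {l, l2} w * E2c' l l2 w) / w^2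
     - 2 * k1' l * Pc' {l} w * E1c' l w / w^3 - k1' l * omega^2 * cc' l * Pc' {l} w * E1c' l w / w"

lemma T2_deriv:
  assumes "w \<noteq> 0" "cc' l \<noteq> 0"
  shows "((\<lambda>w. k1' l * Pc' {l} w * (1/w^2) * E1c' l w) has_field_derivative T2v l w) (at w)"
proof -
  define P' where "P' = (\<Sum>l2\<in>{0..d} - {l}. phi (aa' l2 * w) * aa' l2 * Pc' (insert l2 {l}) w)"
  have d1: "((\<lambda>w. k1' l * Pc' {l} w) has_field_derivative k1' l * P') (at w)"
    unfolding P'_def by (intro DERIV_cmult Pc_deriv)
  have d2: "((\<lambda>w. 1/w^2) has_field_derivative -2/w^3) (at w)"
    using assms by (auto intro!: derivative_eq_intros simp: field_simps power2_eq_square power3_eq_cube)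
  have d: "((\<lambda>w. k1' l * Pc' {l} w * (1/w^2) * E1c' l w) has_field_derivative
      ((k1' l * P') * (1/w^2) + (-2/w^3) * (k1' l * Pc' {l} w)) * E1c' l w
       + (- (omega^2 * w * cc' l) * E1c' l w) * (k1' l * Pc' {l} w * (1/w^2))) (at w)"
    by (intro DERIV_mult d1 d2 E1c_deriv)
  have "k1' l * P' * E1c' l w = (\<Sum>l2\<in>{0..d} - {l}. 2 * k2' l l2 * Pc' {l, l2} w * E2c' l l2 w)"
  proof -
    have "k1' l * P' * E1c' l w = (\<Sum>l2\<in>{0..d} - {l}. (k1' l * aa' l2 / complex_of_real (sqrt (2*pi))) * Pc' (insert l2 {l}) w * E2c' l l2 w)"
      unfolding P'_def sum_distrib_left sum_distrib_right
    proof (rule sum.cong[OF refl])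
      fix l2
      have "k1' l * (phi (aa' l2 * w) * aa' l2 * Pc' (insert l2 {l}) w) * E1c' l w
          = k1' l * aa' l2 * Pc' (insert l2 {l}) w * (phi (aa' l2 * w) * E1c' l w)" by (simp add: ac_simps)
      also have "\<dots> = (k1' l * aa' l2 / complex_of_real (sqrt (2*pi))) * Pc' (insert l2 {l}) w * E2c' l l2 w"
        unfolding I2 by (simp add: field_simps)
      finally show "k1' l * (phi (aa' l2 * w) * aa' l2 * Pc' (insert l2 {l}) w) * E1c' l w = \<dots>" .
    qed
    also have "\<dots> = (\<Sum>l2\<in>{0..d} - {l}. 2 * k2' l l2 * Pc' {l, l2} w * E2c' l l2 w)"
      by (intro sum.cong refl) (simp add: k2_rel[OF assms(2)] insert_commute)
    finally show ?thesis .
  qed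
  then have "((k1' l * P') * (1/w^2) + (-2/w^3) * (k1' l * Pc' {l} w)) * E1c' l w
       + (- (omega^2 * w * cc' l) * E1c' l w) * (k1' l * Pc' {l} w * (1/w^2)) = T2v l w"
    unfolding T2v_def using assms(1)
    by (simp add: field_simps power2_eq_square power3_eq_cube)
  with d show ?thesis by simp
qed


definition "T1v w = - (Pc' {} w * E0c w) / (w^2 * omega)
   + (\<Sum>l\<in>{0..d}. k1' l * omega^2 * cc' l * Pc' {l} w * E1c' l w) / w - omega * Pc' {} w * E0c w"

lemma T1_deriv:
  assumes "w \<noteq> 0" "\<And>l. l \<in> {0..d} \<Longrightarrow> cc' l \<noteq> 0"
  shows "((\<lambda>w. 1/(w * omega) * Pc' {} w * E0c w) has_field_derivative T1v w) (at w)"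
proof -
  define P' where "P' = (\<Sum>l\<in>{0..d} - {}. phi (aa' l * w) * aa' l * Pc' (insert l {}) w)"
  have d1: "((\<lambda>w. 1/(w * omega)) has_field_derivative -1/(w^2 * omega)) (at w)"
    using assms by (auto intro!: derivative_eq_intros simp: field_simps power2_eq_square)
  have d: "((\<lambda>w. 1/(w * omega) * Pc' {} w * E0c w) has_field_derivative
      (-1/(w^2 * omega) * Pc' {} w + P' * (1/(w * omega))) * E0c w + (- (omega^2 * w) * E0c w) * (1/(w * omega) * Pc' {} w)) (at w)"
    unfolding P'_def by (intro DERIV_mult d1 E0c_deriv Pc_deriv)
  have "P' * E0c w / omega = (\<Sum>l\<in>{0..d}. k1' l * omega^2 * cc' l * Pc' {l} w * E1c' l w)"
    unfolding P'_def sum_distrib_right sum_divide_distrib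
  proof (rule sum.cong)
    fix l assume l: "l \<in> {0..d}"
    have "phi (aa' l * w) * aa' l * Pc' (insert l {}) w * E0c w / omega
       = (aa' l / (omega * complex_of_real (sqrt (2*pi)))) * Pc' {l} w * E1c' l w"
      using I1[of \<mu> z l w] by (simp add: field_simps)
    also have "\<dots> = k1' l * omega^2 * cc' l * Pc' {l} w * E1c' l w"
      by (simp add: k1_rel[OF assms(2)[OF l]])
    finally show "phi (aa' l * w) * aa' l * Pc' (insert l {}) w * E0c w / omega = \<dots>" .
  qed simp
  then have "(-1/(w^2 * omega) * Pc' {} w + P' * (1/(w * omega))) * E0c w + (- (omega^2 * w) * E0c w) * (1/(w * omega) * Pc' {} w) = T1v w"
    unfolding T1v_def using assms(1)
    by (simp add: field_simps power2_eq_square)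
  with d show ?thesis by simp
qed

definition "Hc w = 1/(w * omega) * Pc' {} w * E0c w + (\<Sum>l\<in>{0..d}. k1' l * Pc' {l} w * (1/w^2) * E1c' l w)"

definition "Dt w = - omega * Pc' {} w * E0c w + 2*w*( - 1/(2 * omega) * (Pc' {} w * E0c w / w^3)
   - (\<Sum>l\<in>{0..d}. k1' l * (Pc' {l} w * (1/w^4) * E1c' l w))
   + (\<Sum>l1\<in>{0..d}. \<Sum>l2\<in>{0..d} - {l1}. k2' l1 l2 * (Pc' {l1, l2} w / w^3 * E2c' l1 l2 w)))"

lemma Hc_deriv:
  assumes "w \<noteq> 0" "\<And>l. l \<in> {0..d} \<Longrightarrow> cc' l \<noteq> 0"
  shows "(Hc has_field_derivative Dt w) (at w)"
proof -
  have d: "(Hc has_field_derivative T1v w + (\<Sum>l\<in>{0..d}. T2v l w)) (at w)"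
    unfolding Hc_def[abs_def]
    by (intro DERIV_add T1_deriv DERIV_sum T2_deriv assms) auto
  define A where "A = (\<Sum>l\<in>{0..d}. \<Sum>l2\<in>{0..d} - {l}. 2 * k2' l l2 * Pc' {l, l2} w * E2c' l l2 w)"
  define B where "B = (\<Sum>l\<in>{0..d}. 2 * k1' l * Pc' {l} w * E1c' l w)"
  define C where "C = (\<Sum>l\<in>{0..d}. k1' l * omega^2 * cc' l * Pc' {l} w * E1c' l w)"
  have s2: "(\<Sum>l\<in>{0..d}. T2v l w) = A / w^2 - B / w^3 - C / w"
    unfolding T2v_def A_def B_def C_def sum_subtractf sum_divide_distrib ..
  have t1: "T1v w = - (Pc' {} w * E0c w) / (w^2 * omega) + C / w - omega * Pc' {} w * E0c w"
    unfolding T1v_def C_def ..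
  have eB: "2*w*(\<Sum>l\<in>{0..d}. k1' l * (Pc' {l} w * (1/w^4) * E1c' l w)) = B / w^3"
    unfolding B_def sum_distrib_left sum_divide_distrib
    by (rule sum.cong) (use assms(1) in \<open>auto simp: field_simps power2_eq_square power3_eq_cube power4_eq_xxxx\<close>)
  have eA: "2*w*(\<Sum>l1\<in>{0..d}. \<Sum>l2\<in>{0..d} - {l1}. k2' l1 l2 * (Pc' {l1, l2} w / w^3 * E2c' l1 l2 w)) = A / w^2"
    unfolding A_def sum_distrib_left sum_divide_distrib
    by (intro sum.cong refl) (use assms(1) in \<open>auto simp: field_simps power2_eq_square power3_eq_cube\<close>)
  have "T1v w + (\<Sum>l\<in>{0..d}. T2v l w) = Dt w"
    unfolding s2 t1 Dt_def right_diff_distrib distrib_left eA eB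
    using assms(1) by (simp add: field_simps power2_eq_square power3_eq_cube)
  with d show ?thesis by simp
qed

end

lemma continuous_on_PhiProd [continuous_intros]:
  "continuous_on S g \<Longrightarrow> continuous_on S (\<lambda>x. PhiProd d \<mu> J z (g x))"
  unfolding PhiProd_def by (intro continuous_intros) auto

lemma leb_atLeast: "{a::real..} \<in> sets lebesgue"
  by simp

definition "h0 d \<mu> z x = PhiProd d \<mu> {} z (sqrt x) * exp (- (omega^2 * complex_of_real x) / 2) / complex_of_real (x powr (3/2))"
definition "h1 d \<mu> z l x = PhiProd d \<mu> {l} z (sqrt x) * complex_of_real (1 / x^2)
                * exp (- (omega^2 * complex_of_real x / 2) * (1 + complex_of_real ((\<mu> l)^2) * z))"
definition "h2 d \<mu> z l1 l2 x = PhiProd d \<mu> {l1, l2} z (sqrt x) / complex_of_real (x powr (3/2))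
                * exp (- (omega^2 * complex_of_real x / 2)
                        * (1 + complex_of_real ((\<mu> l1)^2) * z + complex_of_real ((\<mu> l2)^2) * z))"

lemma cont_h0: "a \<ge> 0 \<Longrightarrow> continuous_on {a<..} (h0 d \<mu> z)"
  unfolding h0_def[abs_def] by (intro continuous_intros) auto
lemma cont_h1: "a \<ge> 0 \<Longrightarrow> continuous_on {a<..} (h1 d \<mu> z l)"
  unfolding h1_def[abs_def] by (intro continuous_intros) auto
lemma cont_h2: "a \<ge> 0 \<Longrightarrow> continuous_on {a<..} (h2 d \<mu> z l1 l2)"
  unfolding h2_def[abs_def] by (intro continuous_intros) auto

lemma tail_gen:
  fixes f :: "real \<Rightarrow> complex"
  assumes cf: "continuous_on {0<..} f" and a: "a > 0"
    and le: "\<And>x. x > 0 \<Longrightarrow> norm (f x) \<le> M * g x"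
    and gi: "(g has_integral I) {a..}"
  shows "f absolutely_integrable_on {a..}" "norm (integral {a..} f) \<le> M * I"
proof -
  have gi': "((\<lambda>x. M * g x) has_integral M * I) {a..}" using gi by (rule has_integral_mult_right)
  have cf': "continuous_on {a..} f" by (rule continuous_on_subset[OF cf]) (use a in auto)
  show ab: "f absolutely_integrable_on {a..}"
    by (rule measurable_bounded_by_integrable_imp_absolutely_integrable[OF
          continuous_imp_measurable_on_sets_lebesgue[OF cf' leb_atLeast] leb_atLeast])
       (use gi' le a in auto)
  have "norm (integral {a..} f) \<le> integral {a..} (\<lambda>x. M * g x)"
    by (rule integral_norm_bound_integral) (use ab gi' le a in \<open>auto simp: absolutely_integrable_on_def\<close>)
  then show "norm (integral {a..} f) \<le> M * I" using integral_unique[OF gi] by simp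
qed

lemma bound_h0:
  assumes "Im z \<ge> 0" "x > 0"
  shows "norm (h0 d \<mu> z x) \<le> 5^(d+1) * x powr (-3/2)"
proof -
  have e: "norm (exp (- (omega^2 * complex_of_real x) / 2)) = 1" by (rule norm_E0)
  have p: "norm (complex_of_real (x powr (3/2))) = x powr (3/2)" by (simp only: norm_of_real) simp
  have m: "x powr (-3/2) = 1 / x powr (3/2)" by (subst powr_minus_divide[symmetric]) simp
  have "norm (h0 d \<mu> z x) = norm (PhiProd d \<mu> {} z (sqrt x)) * x powr (-3/2)"
    unfolding h0_def norm_mult norm_divide e p m by simp
  also have "\<dots> \<le> 5^(d+1) * x powr (-3/2)"
    by (intro mult_right_mono PhiProd_bound assms) auto
  finally show ?thesis .
qed

lemma bound_h1:
  assumes "Im z \<ge> 0" "x > 0"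
  shows "norm (h1 d \<mu> z l x) \<le> 5^(d+1) * (1 / x^2)"
proof -
  have e: "norm (exp (- (omega^2 * complex_of_real x / 2) * (1 + complex_of_real ((\<mu> l)^2) * z))) \<le> 1"
    by (rule norm_E1) (use assms in auto)
  have p: "norm (complex_of_real (1 / x^2)) = 1 / x^2" by (simp add: norm_divide norm_power)
  have "norm (h1 d \<mu> z l x) \<le> norm (PhiProd d \<mu> {l} z (sqrt x)) * (1/x^2) * 1"
    unfolding h1_def norm_mult p
    by (intro mult_left_mono e) auto
  also have "\<dots> \<le> 5^(d+1) * (1 / x^2)"
    unfolding mult_1_right by (intro mult_right_mono PhiProd_bound assms) auto
  finally show ?thesis .
qed

lemma bound_h2:
  assumes "Im z \<ge> 0" "x > 0"
  shows "norm (h2 d \<mu> z l1 l2 x) \<le> 5^(d+1) * x powr (-3/2)"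
proof -
  have e: "norm (exp (- (omega^2 * complex_of_real x / 2)
                        * (1 + complex_of_real ((\<mu> l1)^2) * z + complex_of_real ((\<mu> l2)^2) * z))) \<le> 1"
    by (rule norm_E2) (use assms in auto)
  have p: "norm (complex_of_real (x powr (3/2))) = x powr (3/2)" by (simp only: norm_of_real) simp
  have m: "x powr (-3/2) = 1 / x powr (3/2)" by (subst powr_minus_divide[symmetric]) simp
  have "norm (h2 d \<mu> z l1 l2 x) \<le> (norm (PhiProd d \<mu> {l1, l2} z (sqrt x)) / x powr (3/2)) * 1"
    unfolding h2_def norm_mult norm_divide p
    by (intro mult_left_mono e) auto
  also have "\<dots> \<le> 5^(d+1) * x powr (-3/2)"
    unfolding m mult_1_right using PhiProd_bound[OF assms(1), of d \<mu> "{l1,l2}" "sqrt x"]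
    by (simp add: divide_right_mono)
  finally show ?thesis .
qed

lemma int_pow32: "a > (0::real) \<Longrightarrow> ((\<lambda>x. x powr (-3/2)) has_integral 2 * a powr (-1/2)) {a..}"
  using has_integral_powr_to_inf[of "-3/2" a] by (simp add: mult.commute)

lemma int_pow2: "a > (0::real) \<Longrightarrow> ((\<lambda>x::real. 1 / x^2) has_integral 1 / a) {a..}"
  using has_integral_inverse_power_to_inf[of 2 a] by simp

lemma tail_h0:
  assumes "Im z \<ge> 0" "a > 0"
  shows "h0 d \<mu> z absolutely_integrable_on {a..}"
        "norm (integral {a..} (h0 d \<mu> z)) \<le> 5^(d+1) * (2 * a powr (-1/2))"
  using tail_gen[OF cont_h0[of 0, simplified] assms(2) bound_h0[OF assms(1)] int_pow32[OF assms(2)]] by auto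

lemma tail_h1:
  assumes "Im z \<ge> 0" "a > 0"
  shows "h1 d \<mu> z l absolutely_integrable_on {a..}"
        "norm (integral {a..} (h1 d \<mu> z l)) \<le> 5^(d+1) * (1 / a)"
  using tail_gen[OF cont_h1[of 0, simplified] assms(2) bound_h1[OF assms(1)] int_pow2[OF assms(2)]] by auto

lemma tail_h2:
  assumes "Im z \<ge> 0" "a > 0"
  shows "h2 d \<mu> z l1 l2 absolutely_integrable_on {a..}"
        "norm (integral {a..} (h2 d \<mu> z l1 l2)) \<le> 5^(d+1) * (2 * a powr (-1/2))"
  using tail_gen[OF cont_h2[of 0, simplified] assms(2) bound_h2[OF assms(1)] int_pow32[OF assms(2)]] by auto

lemma powr32_sq: "t > 0 \<Longrightarrow> (t^2) powr (3/2) = (t::real)^3"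
proof -
  assume t: "t > 0"
  have "(t^2) powr (3/2) = (t powr 2) powr (3/2)" using t by (subst powr_realpow[of t 2, symmetric]) auto
  also have "\<dots> = t powr 3" by (simp add: powr_powr)
  also have "\<dots> = t^3" using t by (subst powr_realpow[of t 3, symmetric]) auto
  finally show ?thesis .
qed

lemma h0_Pc: "t > 0 \<Longrightarrow> h0 d \<mu> z (t^2) = Pc d \<mu> z {} (complex_of_real t) * E0c (complex_of_real t) / (complex_of_real t)^3"
  by (simp add: h0_def PhiProd_Pc E0c_def powr32_sq)

lemma h1_Pc: "t > 0 \<Longrightarrow> h1 d \<mu> z l (t^2) = Pc d \<mu> z {l} (complex_of_real t) * (1 / (complex_of_real t)^4) * E1c \<mu> z l (complex_of_real t)"
  by (simp add: h1_def PhiProd_Pc E1c_def cc_def)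

lemma h2_Pc: "t > 0 \<Longrightarrow> h2 d \<mu> z l1 l2 (t^2) = Pc d \<mu> z {l1, l2} (complex_of_real t) / (complex_of_real t)^3 * E2c \<mu> z l1 l2 (complex_of_real t)"
  by (simp add: h2_def PhiProd_Pc E2c_def powr32_sq)

lemma f_Pc: "Iintegrand d \<mu> z t = Pc d \<mu> z {} (complex_of_real t) * E0c (complex_of_real t) * omega"
  by (simp add: Iintegrand_def PhiProd_Pc E0c_def)

definition "hh d \<mu> z x = - 1 / (2 * omega) * h0 d \<mu> z x - (\<Sum>l\<in>{0..d}. k1 \<mu> z l * h1 d \<mu> z l x)
   + (\<Sum>l1\<in>{0..d}. \<Sum>l2\<in>{0..d} - {l1}. k2 \<mu> z l1 l2 * h2 d \<mu> z l1 l2 x)"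

lemma pointwise:
  assumes "t > 0"
  shows "Iintegrand d \<mu> z t + Dt d \<mu> z (complex_of_real t) = 2 * complex_of_real t * hh d \<mu> z (t^2)"
proof -
  have hh_eq: "hh d \<mu> z (t^2) = - 1/(2 * omega) * (Pc d \<mu> z {} (complex_of_real t) * E0c (complex_of_real t) / (complex_of_real t)^3)
   - (\<Sum>l\<in>{0..d}. k1 \<mu> z l * (Pc d \<mu> z {l} (complex_of_real t) * (1/(complex_of_real t)^4) * E1c \<mu> z l (complex_of_real t)))
   + (\<Sum>l1\<in>{0..d}. \<Sum>l2\<in>{0..d} - {l1}. k2 \<mu> z l1 l2 * (Pc d \<mu> z {l1, l2} (complex_of_real t) / (complex_of_real t)^3 * E2c \<mu> z l1 l2 (complex_of_real t)))"
    unfolding hh_def using assms by (simp add: h0_Pc h1_Pc h2_Pc)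
  have gen: "\<And>Y::complex. P * E * omega + (- omega * P * E + 2 * w * Y) = 2 * w * Y" for P E w
    by (simp add: algebra_simps)
  show ?thesis unfolding Dt_def f_Pc hh_eq by (rule gen)
qed

lemma cont_f [continuous_intros]: "continuous_on S (Iintegrand d \<mu> z)"
  unfolding Iintegrand_def[abs_def] by (intro continuous_intros) auto

lemma cont_hh: "continuous_on {0<..} (hh d \<mu> z)"
  unfolding hh_def[abs_def]
  by (intro continuous_intros cont_h0[of 0, simplified] cont_h1[of 0, simplified] cont_h2[of 0, simplified])

lemma cont_sub: "0 < a \<Longrightarrow> continuous_on {0<..} g \<Longrightarrow> continuous_on {a..b::real} g"
proof -
  assume "0 < a" "continuous_on {0<..} g"
  moreover have "{a..b} \<subseteq> {0<..}" using \<open>0 < a\<close> by auto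
  ultimately show ?thesis using continuous_on_subset by blast
qed

lemma Q_const:
  assumes A: "0 < A" "A \<le> B" and cnz: "\<And>l. l \<in> {0..d} \<Longrightarrow> cc \<mu> z l \<noteq> 0"
  shows "integral {0..B} (Iintegrand d \<mu> z) + Hc d \<mu> z (complex_of_real B) - integral {A^2..B^2} (hh d \<mu> z)
       = integral {0..A} (Iintegrand d \<mu> z) + Hc d \<mu> z (complex_of_real A)"
proof -
  define Q where "Q = (\<lambda>t. integral {0..t} (Iintegrand d \<mu> z) + Hc d \<mu> z (complex_of_real t) - integral {A^2..t^2} (hh d \<mu> z))"
  have der: "(Q has_vector_derivative 0) (at t within {A..B})" if t: "t \<in> {A..B}" for t
  proof -
    have tpos: "t > 0" using t A by auto
    have d1: "((\<lambda>t. integral {0..t} (Iintegrand d \<mu> z)) has_vector_derivative Iintegrand d \<mu> z t) (at t within {A..B})"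
      by (rule has_vector_derivative_within_subset[OF integral_has_vector_derivative[OF cont_f]]) (use t A in auto)
    have d2: "((\<lambda>t. Hc d \<mu> z (complex_of_real t)) has_vector_derivative Dt d \<mu> z (complex_of_real t)) (at t within {A..B})"
      by (rule has_vector_derivative_real_field[OF Hc_deriv]) (use tpos cnz in auto)
    have hc: "continuous_on {A^2..B^2} (hh d \<mu> z)" using A by (intro cont_sub cont_hh) auto
    have tsq: "t^2 \<in> {A^2..B^2}" using t A by (auto intro: power_mono)
    have g: "((\<lambda>u. integral {A^2..u} (hh d \<mu> z)) has_vector_derivative hh d \<mu> z (t^2)) (at (t^2) within (\<lambda>t. t^2) ` {A..B})"
      by (rule has_vector_derivative_within_subset[OF integral_has_vector_derivative[OF hc tsq]])
         (use A in \<open>auto intro: power_mono\<close>)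
    have sq: "((\<lambda>t::real. t^2) has_vector_derivative 2 * t) (at t within {A..B})"
      by (auto intro!: derivative_eq_intros simp: has_real_derivative_iff_has_vector_derivative[symmetric])
    have d3: "((\<lambda>t. integral {A^2..t^2} (hh d \<mu> z)) has_vector_derivative (2*t) *\<^sub>R hh d \<mu> z (t^2)) (at t within {A..B})"
      using vector_diff_chain_within[OF sq g] by (simp add: o_def)
    have "(Q has_vector_derivative Iintegrand d \<mu> z t + Dt d \<mu> z (complex_of_real t) - (2*t) *\<^sub>R hh d \<mu> z (t^2)) (at t within {A..B})"
      unfolding Q_def by (intro derivative_intros d1 d2 d3)
    moreover have "Iintegrand d \<mu> z t + Dt d \<mu> z (complex_of_real t) - (2*t) *\<^sub>R hh d \<mu> z (t^2) = 0"
      using pointwise[OF tpos, of d \<mu> z] by (simp add: scaleR_conv_of_real)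
    ultimately show ?thesis by simp
  qed
  have "((\<lambda>t. 0) has_integral (Q B - Q A)) {A..B}"
    by (rule fundamental_theorem_of_calculus[OF A(2) der])
  then have "Q B = Q A" using has_integral_0[of "{A..B}"] has_integral_unique by fastforce
  then show ?thesis by (simp add: Q_def)
qed

definition "TT d \<mu> z a = - 1 / (2 * omega) * integral {a..} (h0 d \<mu> z)
   - (\<Sum>l\<in>{0..d}. k1 \<mu> z l * integral {a..} (h1 d \<mu> z l))
   + (\<Sum>l1\<in>{0..d}. \<Sum>l2\<in>{0..d} - {l1}. k2 \<mu> z l1 l2 * integral {a..} (h2 d \<mu> z l1 l2))"

definition "Rf d \<mu> z A = integral {0..A} (Iintegrand d \<mu> z) + Hc d \<mu> z (complex_of_real A) + TT d \<mu> z (A^2)"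

lemma split_int:
  fixes f :: "real \<Rightarrow> complex"
  assumes "f integrable_on {a..b}" "f integrable_on {b..}" "a \<le> b"
  shows "integral {a..} f = integral {a..b} f + integral {b..} f"
proof -
  have "(f has_integral (integral {a..b} f + integral {b..} f)) ({a..b} \<union> {b..})"
    by (rule has_integral_Un) (use assms in \<open>auto intro: negligible_subset[OF negligible_sing[of b]]\<close>)
  moreover have "{a..b} \<union> {b..} = {a..}" using assms(3) by auto
  ultimately show ?thesis by (simp add: integral_unique)
qed

lemma piece:
  fixes f :: "real \<Rightarrow> complex"
  assumes "continuous_on {0<..} f" "f absolutely_integrable_on {b..}" "0 < a" "a \<le> b"
  shows "(f has_integral (integral {a..} f - integral {b..} f)) {a..b}"
proof -
  have fi: "f integrable_on {a..b}" using assms by (intro integrable_continuous_interval cont_sub)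
  have "integral {a..} f = integral {a..b} f + integral {b..} f"
    by (rule split_int[OF fi _ assms(4)]) (use assms(2) in \<open>simp add: absolutely_integrable_on_def\<close>)
  then show ?thesis using fi by (simp add: has_integral_integral)
qed

lemma TT_diff:
  assumes "Im z \<ge> 0" "0 < a" "a \<le> b"
  shows "(hh d \<mu> z has_integral (TT d \<mu> z a - TT d \<mu> z b)) {a..b}"
proof -
  have b: "0 < b" using assms by simp
  have i0: "(h0 d \<mu> z has_integral (integral {a..} (h0 d \<mu> z) - integral {b..} (h0 d \<mu> z))) {a..b}"
    by (rule piece[OF cont_h0[of 0, simplified] tail_h0(1)[OF assms(1) b] assms(2,3)])
  have i1: "(h1 d \<mu> z l has_integral (integral {a..} (h1 d \<mu> z l) - integral {b..} (h1 d \<mu> z l))) {a..b}" for l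
    by (rule piece[OF cont_h1[of 0, simplified] tail_h1(1)[OF assms(1) b] assms(2,3)])
  have i2: "(h2 d \<mu> z l1 l2 has_integral (integral {a..} (h2 d \<mu> z l1 l2) - integral {b..} (h2 d \<mu> z l1 l2))) {a..b}" for l1 l2
    by (rule piece[OF cont_h2[of 0, simplified] tail_h2(1)[OF assms(1) b] assms(2,3)])
  have "(hh d \<mu> z has_integral
     (- 1 / (2 * omega) * (integral {a..} (h0 d \<mu> z) - integral {b..} (h0 d \<mu> z))
     - (\<Sum>l\<in>{0..d}. k1 \<mu> z l * (integral {a..} (h1 d \<mu> z l) - integral {b..} (h1 d \<mu> z l)))
     + (\<Sum>l1\<in>{0..d}. \<Sum>l2\<in>{0..d} - {l1}. k2 \<mu> z l1 l2 * (integral {a..} (h2 d \<mu> z l1 l2) - integral {b..} (h2 d \<mu> z l1 l2))))) {a..b}"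
    unfolding hh_def[abs_def]
    by (intro has_integral_diff has_integral_add has_integral_mult_right has_integral_sum i0 i1 i2) auto
  moreover have "(- 1 / (2 * omega) * (integral {a..} (h0 d \<mu> z) - integral {b..} (h0 d \<mu> z))
     - (\<Sum>l\<in>{0..d}. k1 \<mu> z l * (integral {a..} (h1 d \<mu> z l) - integral {b..} (h1 d \<mu> z l)))
     + (\<Sum>l1\<in>{0..d}. \<Sum>l2\<in>{0..d} - {l1}. k2 \<mu> z l1 l2 * (integral {a..} (h2 d \<mu> z l1 l2) - integral {b..} (h2 d \<mu> z l1 l2))))
     = TT d \<mu> z a - TT d \<mu> z b"
    unfolding TT_def right_diff_distrib sum_subtractf by (simp add: algebra_simps)
  ultimately show ?thesis by simp
qed

lemma R_const:
  assumes "Im z \<ge> 0" "0 < A" "A \<le> B" and cnz: "\<And>l. l \<in> {0..d} \<Longrightarrow> cc \<mu> z l \<noteq> 0"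
  shows "Rf d \<mu> z A = Rf d \<mu> z B"
proof -
  have A2: "0 < A^2" "A^2 \<le> B^2" using assms by (auto intro: power_mono)
  have "integral {A^2..B^2} (hh d \<mu> z) = TT d \<mu> z (A^2) - TT d \<mu> z (B^2)"
    using TT_diff[OF assms(1) A2] by (simp add: integral_unique)
  moreover note Q_const[OF assms(2,3) cnz]
  ultimately show ?thesis unfolding Rf_def by (simp add: algebra_simps)
qed

definition "Kf d \<mu> z = 5^(d+1) * (2 + 2 * (\<Sum>l\<in>{0..d}. norm (k1 \<mu> z l))
    + 2 * (\<Sum>l1\<in>{0..d}. \<Sum>l2\<in>{0..d} - {l1}. norm (k2 \<mu> z l1 l2)))"

lemma norm_omega: "norm omega = sqrt 2"
  by (simp add: omega_def cmod_def)

lemma Pc_bound: "Im z \<ge> 0 \<Longrightarrow> norm (Pc d \<mu> z J (complex_of_real t)) \<le> 5^(d+1)"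
  using PhiProd_bound[of z d \<mu> J t] by (simp add: PhiProd_Pc)

lemma Hc_bound:
  assumes "Im z \<ge> 0" "B \<ge> 1"
  shows "norm (Hc d \<mu> z (complex_of_real B)) \<le> 5^(d+1) / B + (\<Sum>l\<in>{0..d}. norm (k1 \<mu> z l)) * 5^(d+1) / B"
proof -
  let ?w = "complex_of_real B"
  have B0: "B > 0" using assms by simp
  have t1: "norm (1/(?w * omega) * Pc d \<mu> z {} ?w * E0c ?w) \<le> 5^(d+1) / B"
  proof -
    have e: "norm (E0c ?w) = 1" unfolding E0c_def using norm_E0[of "B^2"] by simp
    have "norm (1/(?w * omega) * Pc d \<mu> z {} ?w * E0c ?w) = norm (Pc d \<mu> z {} ?w) / (B * sqrt 2)"
      using B0 by (simp add: norm_mult norm_divide e norm_omega)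
    also have "\<dots> \<le> norm (Pc d \<mu> z {} ?w) / B"
      using B0 by (intro divide_left_mono) auto
    also have "\<dots> \<le> 5^(d+1) / B" using B0 by (intro divide_right_mono Pc_bound assms) auto
    finally show ?thesis .
  qed
  have t2: "norm (k1 \<mu> z l * Pc d \<mu> z {l} ?w * (1/?w^2) * E1c \<mu> z l ?w) \<le> norm (k1 \<mu> z l) * 5^(d+1) / B" for l
  proof -
    have e: "norm (E1c \<mu> z l ?w) \<le> 1" unfolding E1c_def cc_def
      using norm_E1[of "B^2" z "(\<mu> l)^2"] assms by simp
    have "norm (k1 \<mu> z l * Pc d \<mu> z {l} ?w * (1/?w^2) * E1c \<mu> z l ?w)
       \<le> norm (k1 \<mu> z l) * 5^(d+1) * (1/B^2) * 1"
      unfolding norm_mult using B0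
      by (intro mult_mono Pc_bound assms e) (auto simp: norm_divide norm_power)
    also have "\<dots> \<le> norm (k1 \<mu> z l) * 5^(d+1) * (1/B)"
    proof -
      have "B * 1 \<le> B * B" using assms by (intro mult_left_mono) auto
      then have "1/B^2 \<le> 1/B" using B0 by (intro divide_left_mono) (auto simp: power2_eq_square)
      then show ?thesis unfolding mult_1_right by (intro mult_left_mono) auto
    qed
    finally show ?thesis by simp
  qed
  have "norm (Hc d \<mu> z ?w) \<le> norm (1/(?w * omega) * Pc d \<mu> z {} ?w * E0c ?w)
      + (\<Sum>l\<in>{0..d}. norm (k1 \<mu> z l * Pc d \<mu> z {l} ?w * (1/?w^2) * E1c \<mu> z l ?w))"
    unfolding Hc_def by (rule order_trans[OF norm_triangle_ineq add_left_mono[OF norm_sum]])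
  also have "\<dots> \<le> 5^(d+1) / B + (\<Sum>l\<in>{0..d}. norm (k1 \<mu> z l) * 5^(d+1) / B)"
    by (intro add_mono t1 sum_mono t2)
  finally show ?thesis by (simp add: sum_distrib_right sum_divide_distrib)
qed

lemma powr_half_sq: "B > 0 \<Longrightarrow> (B^2) powr (-1/2) = 1 / (B::real)"
proof -
  assume t: "B > 0"
  have "(B^2) powr (-1/2) = (B powr 2) powr (-1/2)" using t by (subst powr_realpow[of B 2, symmetric]) auto
  also have "\<dots> = B powr (-1)" by (simp add: powr_powr)
  also have "\<dots> = 1 / B" using t by (simp add: powr_minus_divide)
  finally show ?thesis .
qed

lemma TT_bound:
  assumes "Im z \<ge> 0" "B \<ge> 1"
  shows "norm (TT d \<mu> z (B^2)) \<le> 5^(d+1) / B + (\<Sum>l\<in>{0..d}. norm (k1 \<mu> z l)) * 5^(d+1) / B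
      + (\<Sum>l1\<in>{0..d}. \<Sum>l2\<in>{0..d} - {l1}. norm (k2 \<mu> z l1 l2)) * (2 * 5^(d+1)) / B"
proof -
  have B0: "B > 0" using assms by simp
  have b2: "B^2 > 0" using B0 by simp
  let ?M = "5^(d+1) :: real"
  have t0: "norm (- 1 / (2 * omega) * integral {B^2..} (h0 d \<mu> z)) \<le> ?M / B"
  proof -
    have "norm (- 1 / (2 * omega) * integral {B^2..} (h0 d \<mu> z)) = norm (integral {B^2..} (h0 d \<mu> z)) / (2 * sqrt 2)"
      by (simp add: norm_mult norm_divide norm_omega)
    also have "\<dots> \<le> (?M * (2 * (B^2) powr (-1/2))) / (2 * sqrt 2)"
      by (intro divide_right_mono tail_h0(2)[OF assms(1) b2]) auto
    also have "\<dots> = (?M / B) / sqrt 2" unfolding powr_half_sq[OF B0] by simp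
    also have "\<dots> \<le> ?M / B"
    proof -
      have x0: "0 \<le> ?M / B" using B0 by (intro divide_nonneg_pos) auto
      have "?M / B * 1 \<le> ?M / B * sqrt 2" by (rule mult_left_mono[OF _ x0]) simp
      then show ?thesis by (subst pos_divide_le_eq) auto
    qed
    finally show ?thesis .
  qed
  have t1: "norm (k1 \<mu> z l * integral {B^2..} (h1 d \<mu> z l)) \<le> norm (k1 \<mu> z l) * ?M / B" for l
  proof -
    have "norm (k1 \<mu> z l * integral {B^2..} (h1 d \<mu> z l)) \<le> norm (k1 \<mu> z l) * (?M * (1 / B^2))"
      unfolding norm_mult by (intro mult_left_mono tail_h1(2)[OF assms(1) b2]) auto
    also have "\<dots> \<le> norm (k1 \<mu> z l) * (?M * (1 / B))"
    proof -
      have "B * 1 \<le> B * B" using assms by (intro mult_left_mono) auto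
      then have "1/B^2 \<le> 1/B" using B0 by (intro divide_left_mono) (auto simp: power2_eq_square)
      then show ?thesis by (intro mult_left_mono) auto
    qed
    finally show ?thesis by simp
  qed
  have t2: "norm (k2 \<mu> z l1 l2 * integral {B^2..} (h2 d \<mu> z l1 l2)) \<le> norm (k2 \<mu> z l1 l2) * (2 * ?M) / B" for l1 l2
  proof -
    have "norm (k2 \<mu> z l1 l2 * integral {B^2..} (h2 d \<mu> z l1 l2)) \<le> norm (k2 \<mu> z l1 l2) * (?M * (2 * (B^2) powr (-1/2)))"
      unfolding norm_mult by (intro mult_left_mono tail_h2(2)[OF assms(1) b2]) auto
    then show ?thesis unfolding powr_half_sq[OF B0] by simp
  qed
  have "norm (TT d \<mu> z (B^2)) \<le> norm (- 1 / (2 * omega) * integral {B^2..} (h0 d \<mu> z))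
      + (\<Sum>l\<in>{0..d}. norm (k1 \<mu> z l * integral {B^2..} (h1 d \<mu> z l)))
      + (\<Sum>l1\<in>{0..d}. \<Sum>l2\<in>{0..d} - {l1}. norm (k2 \<mu> z l1 l2 * integral {B^2..} (h2 d \<mu> z l1 l2)))"
    unfolding TT_def
    by (rule order_trans[OF norm_triangle_ineq add_mono[OF norm_triangle_ineq4[THEN order_trans] 
         order_trans[OF norm_sum sum_mono[OF norm_sum]]]]) (intro add_left_mono norm_sum)
  also have "\<dots> \<le> ?M / B + (\<Sum>l\<in>{0..d}. norm (k1 \<mu> z l) * ?M / B)
      + (\<Sum>l1\<in>{0..d}. \<Sum>l2\<in>{0..d} - {l1}. norm (k2 \<mu> z l1 l2) * (2 * ?M) / B)"
    by (intro add_mono t0 sum_mono t1 t2)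
  finally show ?thesis by (simp add: sum_distrib_right sum_divide_distrib)
qed

lemma RF_bound:
  assumes "Im z \<ge> 0" "B \<ge> 1"
  shows "norm (Rf d \<mu> z B - integral {0..B} (Iintegrand d \<mu> z)) \<le> Kf d \<mu> z / B"
proof -
  have "norm (Rf d \<mu> z B - integral {0..B} (Iintegrand d \<mu> z)) \<le> norm (Hc d \<mu> z (complex_of_real B)) + norm (TT d \<mu> z (B^2))"
    unfolding Rf_def by (simp add: norm_triangle_ineq)
  also have "\<dots> \<le> (5^(d+1) / B + (\<Sum>l\<in>{0..d}. norm (k1 \<mu> z l)) * 5^(d+1) / B) +
      (5^(d+1) / B + (\<Sum>l\<in>{0..d}. norm (k1 \<mu> z l)) * 5^(d+1) / B
      + (\<Sum>l1\<in>{0..d}. \<Sum>l2\<in>{0..d} - {l1}. norm (k2 \<mu> z l1 l2)) * (2 * 5^(d+1)) / B)"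
    by (intro add_mono Hc_bound TT_bound assms)
  also have "\<dots> = Kf d \<mu> z / B" unfolding Kf_def using assms by (simp add: field_simps)
  finally show ?thesis .
qed

definition Sset :: "nat \<Rightarrow> (nat \<Rightarrow> real) \<Rightarrow> complex set" where "Sset d \<mu> = {z::complex. Im z \<ge> 0} - {- 1 / complex_of_real ((\<mu> j)^2) | j. j \<in> {0..d}}"

lemma Sset_props:
  assumes mu_nz: "\<forall>j\<in>{0..d}. \<mu> j \<noteq> 0" and z: "z \<in> Sset d \<mu>"
  shows "Im z \<ge> 0" "\<And>l. l \<in> {0..d} \<Longrightarrow> cc \<mu> z l \<noteq> 0"
proof -
  show "Im z \<ge> 0" using z by (simp add: Sset_def)
  fix l assume l: "l \<in> {0..d}"
  show "cc \<mu> z l \<noteq> 0"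
  proof
    assume "cc \<mu> z l = 0"
    then have "1 + complex_of_real ((\<mu> l)^2) * z = 0" by (simp add: cc_def)
    moreover have "complex_of_real ((\<mu> l)^2) \<noteq> 0" using mu_nz l by simp
    ultimately have "z = - 1 / complex_of_real ((\<mu> l)^2)" by (simp add: field_simps add_eq_0_iff)
    then show False using z l by (auto simp: Sset_def)
  qed
qed

lemma integrable_f: "Iintegrand d \<mu> z integrable_on {0..B}"
  by (intro integrable_continuous_interval cont_f)

lemma conv_a:
  assumes "Im z \<ge> 0" and cnz: "\<And>l. l \<in> {0..d} \<Longrightarrow> cc \<mu> z l \<noteq> 0"
  shows "((\<lambda>B. integral {0..B} (Iintegrand d \<mu> z)) \<longlongrightarrow> Rf d \<mu> z 1) at_top"
proof -
  have "((\<lambda>B. Rf d \<mu> z 1 - integral {0..B} (Iintegrand d \<mu> z)) \<longlongrightarrow> 0) at_top"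
  proof (rule Lim_null_comparison)
    show "\<forall>\<^sub>F B in at_top. norm (Rf d \<mu> z 1 - integral {0..B} (Iintegrand d \<mu> z)) \<le> Kf d \<mu> z / B"
      using eventually_ge_at_top[of "1::real"]
    proof eventually_elim
      case (elim B)
      then have "Rf d \<mu> z 1 = Rf d \<mu> z B" by (intro R_const assms) auto
      then show ?case using RF_bound[OF assms(1) elim] by simp
    qed
    show "((\<lambda>B. Kf d \<mu> z / B) \<longlongrightarrow> 0) at_top"
      by (intro tendsto_divide_0[OF tendsto_const] filterlim_at_top_imp_at_infinity filterlim_ident)
  qed
  then have "((\<lambda>B. Rf d \<mu> z 1 - (Rf d \<mu> z 1 - integral {0..B} (Iintegrand d \<mu> z))) \<longlongrightarrow> Rf d \<mu> z 1 - 0) at_top"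
    by (intro tendsto_diff tendsto_const)
  then show ?thesis by simp
qed

lemma Ifun_eq:
  assumes "Im z \<ge> 0" and cnz: "\<And>l. l \<in> {0..d} \<Longrightarrow> cc \<mu> z l \<noteq> 0" and A: "A > 0"
  shows "Ifun d \<mu> z = Rf d \<mu> z A"
proof -
  have "Ifun d \<mu> z = Rf d \<mu> z 1"
    unfolding Ifun_def by (rule tendsto_Lim[OF _ conv_a[OF assms(1,2)]]) simp
  also have "\<dots> = Rf d \<mu> z A"
    using R_const[OF assms(1) _ _ cnz, of A 1] R_const[OF assms(1) _ _ cnz, of 1 A] A
    by (cases "A \<le> 1") auto
  finally show ?thesis .
qed

definition "Rstmt d \<mu> z A = (             integral {0..A} (Iintegrand d \<mu> z)
           + 1 / (complex_of_real A * omega) * PhiProd d \<mu> {} z A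
               * exp (- (omega^2 * complex_of_real (A^2)) / 2)
           - 1 / (2 * omega) *
               integral {A^2..} (\<lambda>x. PhiProd d \<mu> {} z (sqrt x)
                  * exp (- (omega^2 * complex_of_real x) / 2) / complex_of_real (x powr (3/2)))
           + (\<Sum>l\<in>{0..d}.
               complex_of_real (\<mu> l) * csqrt z
                 / (complex_of_real (sqrt (2*pi)) * omega^2 * (1 + complex_of_real ((\<mu> l)^2) * z))
               * PhiProd d \<mu> {l} z A * complex_of_real (1 / A^2)
               * exp (- (omega^2 * complex_of_real (A^2) / 2) * (1 + complex_of_real ((\<mu> l)^2) * z)))
           - (\<Sum>l\<in>{0..d}.
               complex_of_real (\<mu> l) * csqrt z
                 / (complex_of_real (sqrt (2*pi)) * omega^2 * (1 + complex_of_real ((\<mu> l)^2) * z))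
               * integral {A^2..} (\<lambda>x. PhiProd d \<mu> {l} z (sqrt x) * complex_of_real (1 / x^2)
                  * exp (- (omega^2 * complex_of_real x / 2) * (1 + complex_of_real ((\<mu> l)^2) * z))))
           + (\<Sum>l1\<in>{0..d}. \<Sum>l2\<in>{0..d} - {l1}.
               complex_of_real (\<mu> l1 * \<mu> l2) * z
                 / (complex_of_real (4 * pi) * omega * (1 + complex_of_real ((\<mu> l1)^2) * z))
               * integral {A^2..} (\<lambda>x. PhiProd d \<mu> {l1, l2} z (sqrt x) / complex_of_real (x powr (3/2))
                  * exp (- (omega^2 * complex_of_real x / 2)
                          * (1 + complex_of_real ((\<mu> l1)^2) * z + complex_of_real ((\<mu> l2)^2) * z)))))"

lemma gen_rearr: "F + T0 - 1 / c * J0 + SB - SJ1 + SJ2 = F + (T0 + SB) + (- 1 / c * J0 - SJ1 + SJ2)"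
  for F T0 J0 SB SJ1 SJ2 c :: complex
  by (simp add: algebra_simps)

lemma Rstmt_eq:
  assumes "A > 0"
  shows "Rstmt d \<mu> z A = Rf d \<mu> z A"
proof -
  have e1: "Hc d \<mu> z (complex_of_real A) = 1 / (complex_of_real A * omega) * PhiProd d \<mu> {} z A
               * exp (- (omega^2 * complex_of_real (A^2)) / 2) + (\<Sum>l\<in>{0..d}.
               complex_of_real (\<mu> l) * csqrt z
                 / (complex_of_real (sqrt (2*pi)) * omega^2 * (1 + complex_of_real ((\<mu> l)^2) * z))
               * PhiProd d \<mu> {l} z A * complex_of_real (1 / A^2)
               * exp (- (omega^2 * complex_of_real (A^2) / 2) * (1 + complex_of_real ((\<mu> l)^2) * z)))"
    by (simp add: Hc_def PhiProd_Pc E0c_def E1c_def cc_def k1_def)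
  have e2: "TT d \<mu> z (A^2) = - 1 / (2 * omega) * integral {A^2..} (\<lambda>x. PhiProd d \<mu> {} z (sqrt x)
                  * exp (- (omega^2 * complex_of_real x) / 2) / complex_of_real (x powr (3/2))) - (\<Sum>l\<in>{0..d}.
               complex_of_real (\<mu> l) * csqrt z
                 / (complex_of_real (sqrt (2*pi)) * omega^2 * (1 + complex_of_real ((\<mu> l)^2) * z))
               * integral {A^2..} (\<lambda>x. PhiProd d \<mu> {l} z (sqrt x) * complex_of_real (1 / x^2)
                  * exp (- (omega^2 * complex_of_real x / 2) * (1 + complex_of_real ((\<mu> l)^2) * z)))) + (\<Sum>l1\<in>{0..d}. \<Sum>l2\<in>{0..d} - {l1}.
               complex_of_real (\<mu> l1 * \<mu> l2) * z
                 / (complex_of_real (4 * pi) * omega * (1 + complex_of_real ((\<mu> l1)^2) * z))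
               * integral {A^2..} (\<lambda>x. PhiProd d \<mu> {l1, l2} z (sqrt x) / complex_of_real (x powr (3/2))
                  * exp (- (omega^2 * complex_of_real x / 2)
                          * (1 + complex_of_real ((\<mu> l1)^2) * z + complex_of_real ((\<mu> l2)^2) * z))))"
    by (simp add: TT_def h0_def[abs_def] h1_def[abs_def] h2_def[abs_def] k1_def k2_def cc_def)
  show ?thesis unfolding Rstmt_def Rf_def e1 e2 by (rule gen_rearr)
qed

definition "UHP = {z::complex. Im z \<ge> 0}"

lemma cont_csqrt_fst: "continuous_on (UHP \<times> T) (\<lambda>p. csqrt (fst p))"
  by (rule continuous_on_compose2[OF continuous_on_csqrt_UHP continuous_on_fst]) (auto simp: UHP_def)

lemma cont_phi [continuous_intros]: "continuous_on S f \<Longrightarrow> continuous_on S (\<lambda>x. phi (f x))"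
  unfolding phi_def by (intro continuous_intros) auto

lemma cont_integrand2:
  "continuous_on (UHP \<times> T) (\<lambda>(x, t). Iintegrand d \<mu> x t)"
proof -
  have "continuous_on (UHP \<times> T) (\<lambda>p. (\<Prod>j\<in>{0..d} - {}. Phi (complex_of_real (\<mu> j) * csqrt (fst p) * omega * complex_of_real (snd p)))
          * exp (- (omega^2 * complex_of_real ((snd p)^2)) / 2) * omega)"
    by (intro continuous_intros cont_csqrt_fst) auto
  then show ?thesis by (simp add: Iintegrand_def PhiProd_def split_beta')
qed

lemma cont_param: "continuous_on UHP (\<lambda>z. integral {0..B} (Iintegrand d \<mu> z))"
proof -
  have "continuous_on UHP (\<lambda>x. integral (cbox 0 B) (Iintegrand d \<mu> x))"
    by (rule integral_continuous_on_param) (rule cont_integrand2)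
  then show ?thesis by simp
qed

definition "dgj \<mu> j x t = phi (complex_of_real (\<mu> j) * csqrt x * omega * complex_of_real t)
   * (complex_of_real (\<mu> j) * omega * complex_of_real t / (2 * csqrt x))"

lemma gj_deriv:
  assumes "x \<notin> \<real>\<^sub>\<le>\<^sub>0"
  shows "((\<lambda>x. Phi (complex_of_real (\<mu> j) * csqrt x * omega * complex_of_real t)) has_field_derivative dgj \<mu> j x t) (at x)"
proof -
  have "csqrt x \<noteq> 0" using assms by auto
  then show ?thesis unfolding dgj_def
    by (auto intro!: derivative_eq_intros assms simp: field_simps)
qed

definition "fx d \<mu> x t = (\<Sum>l\<in>{0..d}. dgj \<mu> l x t * (\<Prod>j\<in>{0..d} - {l}. Phi (complex_of_real (\<mu> j) * csqrt x * omega * complex_of_real t)))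
   * exp (- (omega^2 * complex_of_real (t^2)) / 2) * omega"

lemma Iintegrand_zderiv:
  assumes "x \<notin> \<real>\<^sub>\<le>\<^sub>0"
  shows "((\<lambda>x. Iintegrand d \<mu> x t) has_field_derivative fx d \<mu> x t) (at x)"
proof -
  have "((\<lambda>x. \<Prod>j\<in>{0..d}. Phi (complex_of_real (\<mu> j) * csqrt x * omega * complex_of_real t)) has_field_derivative
     (\<Sum>l\<in>{0..d}. dgj \<mu> l x t * (\<Prod>j\<in>{0..d} - {l}. Phi (complex_of_real (\<mu> j) * csqrt x * omega * complex_of_real t)))) (at x)"
    by (rule has_field_derivative_prod) (rule gj_deriv[OF assms])
  then have "((\<lambda>x. (\<Prod>j\<in>{0..d}. Phi (complex_of_real (\<mu> j) * csqrt x * omega * complex_of_real t)) * (exp (- (omega^2 * complex_of_real (t^2)) / 2) * omega))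
     has_field_derivative fx d \<mu> x t) (at x)"
    unfolding fx_def by (rule DERIV_cmult_right[THEN DERIV_cong]) (simp add: ac_simps)
  then show ?thesis by (simp add: Iintegrand_def PhiProd_def ac_simps)
qed

lemma holo_param:
  assumes "open U" "convex U" "U \<subseteq> {z. Im z > 0}"
  shows "(\<lambda>z. integral {0..B} (Iintegrand d \<mu> z)) holomorphic_on U"
proof -
  have U1: "U \<subseteq> UHP" using assms(3) by (auto simp: UHP_def)
  have nr: "x \<notin> \<real>\<^sub>\<le>\<^sub>0" if "x \<in> U" for x using assms(3) that by (auto simp: complex_nonpos_Reals_iff)
  have cs: "continuous_on (U \<times> T) (\<lambda>p. csqrt (fst p))" for T :: "real set"
    by (rule continuous_on_subset[OF cont_csqrt_fst]) (use U1 in auto)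
  have cfx: "continuous_on (U \<times> cbox 0 B) (\<lambda>(x, t). fx d \<mu> x t)"
  proof -
    have "continuous_on (U \<times> cbox 0 B) (\<lambda>p. (\<Sum>l\<in>{0..d}. phi (complex_of_real (\<mu> l) * csqrt (fst p) * omega * complex_of_real (snd p))
       * (complex_of_real (\<mu> l) * omega * complex_of_real (snd p) / (2 * csqrt (fst p)))
       * (\<Prod>j\<in>{0..d} - {l}. Phi (complex_of_real (\<mu> j) * csqrt (fst p) * omega * complex_of_real (snd p))))
       * exp (- (omega^2 * complex_of_real ((snd p)^2)) / 2) * omega)"
    proof (intro continuous_intros)
      show "continuous_on (U \<times> cbox 0 B) (\<lambda>p. csqrt (fst p))" by (rule cs)
      show "\<forall>p\<in>U \<times> cbox 0 B. 2 * csqrt (fst p) \<noteq> 0" using nr by (fastforce simp: complex_nonpos_Reals_iff)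
    qed (auto intro: cs)
    then show ?thesis by (simp add: fx_def dgj_def split_beta')
  qed
  have "(\<lambda>x. integral (cbox 0 B) (Iintegrand d \<mu> x)) holomorphic_on U"
  proof (rule leibniz_rule_holomorphic[where fx = "fx d \<mu>"])
    fix x t assume x: "x \<in> U"
    show "((\<lambda>x. Iintegrand d \<mu> x t) has_field_derivative fx d \<mu> x t) (at x within U)"
      by (rule has_field_derivative_at_within[OF Iintegrand_zderiv[OF nr[OF x]]])
  next
    fix x show "Iintegrand d \<mu> x integrable_on cbox 0 B" using integrable_f by simp
  qed (use cfx assms(2) in auto)
  then show ?thesis by simp
qed

lemma cont_Kf:
  assumes mu_nz: "\<forall>j\<in>{0..d}. \<mu> j \<noteq> 0"
  shows "continuous_on (Sset d \<mu>) (Kf d \<mu>)"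
proof -
  have cs: "continuous_on (Sset d \<mu>) csqrt"
    by (rule continuous_on_subset[OF continuous_on_csqrt_UHP]) (auto simp: Sset_def)
  have nz: "\<forall>z\<in>Sset d \<mu>. 1 + complex_of_real ((\<mu> l)^2) * z \<noteq> 0" if "l \<in> {0..d}" for l
    using Sset_props(2)[OF mu_nz _ that] by (auto simp: cc_def)
  show ?thesis unfolding Kf_def[abs_def] k1_def k2_def cc_def
    by (intro continuous_intros cs) (use nz in \<open>auto simp: pi_gt_zero\<close>)
qed

lemma unif:
  assumes mu_nz: "\<forall>j\<in>{0..d}. \<mu> j \<noteq> 0" and N: "compact N" "N \<subseteq> Sset d \<mu>"
  shows "uniform_limit N (\<lambda>B z. integral {0..B} (Iintegrand d \<mu> z)) (Ifun d \<mu>) at_top"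
proof -
  have "compact (Kf d \<mu> ` N)"
    by (rule compact_continuous_image[OF continuous_on_subset[OF cont_Kf[OF mu_nz] N(2)] N(1)])
  then obtain C where C: "\<And>z. z \<in> N \<Longrightarrow> norm (Kf d \<mu> z) \<le> C"
    using compact_imp_bounded bounded_iff by (metis imageI)
  define C' where "C' = max C 1"
  have C'pos: "C' > 0" by (simp add: C'_def)
  show ?thesis unfolding uniform_limit_iff
  proof (intro allI impI)
    fix e :: real assume e: "e > 0"
    show "\<forall>\<^sub>F B in at_top. \<forall>z\<in>N. dist (integral {0..B} (Iintegrand d \<mu> z)) (Ifun d \<mu> z) < e"
      using eventually_ge_at_top[of "max 1 (2 * C' / e)"]
    proof eventually_elim
      case (elim B)
      then have B1: "B \<ge> 1" and B2: "B \<ge> 2 * C' / e" by auto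
      show ?case
      proof
        fix z assume z: "z \<in> N"
        then have zS: "z \<in> Sset d \<mu>" using N by auto
        note zp = Sset_props[OF mu_nz zS]
        have "Ifun d \<mu> z = Rf d \<mu> z B" using B1 by (intro Ifun_eq zp) auto
        then have "dist (integral {0..B} (Iintegrand d \<mu> z)) (Ifun d \<mu> z) = norm (Rf d \<mu> z B - integral {0..B} (Iintegrand d \<mu> z))"
          by (simp add: dist_norm norm_minus_commute)
        also have "\<dots> \<le> Kf d \<mu> z / B" by (rule RF_bound[OF zp(1) B1])
        also have "\<dots> \<le> C' / B"
          using C[OF z] B1 by (intro divide_right_mono) (auto simp: C'_def)
        also have "\<dots> \<le> e / 2"
          using B2 B1 e C'pos by (simp add: field_simps)
        also have "\<dots> < e" using e by simp
        finally show "dist (integral {0..B} (Iintegrand d \<mu> z)) (Ifun d \<mu> z) < e" .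
      qed
    qed
  qed
qed

lemma avoid:
  assumes z0: "z0 \<in> Sset d \<mu>"
  shows "\<exists>r>0. cball z0 r \<inter> UHP \<subseteq> Sset d \<mu>"
proof -
  let ?P = "{- 1 / complex_of_real ((\<mu> j)^2) | j. j \<in> {0..d}}"
  have fin: "finite ?P"
  proof -
    have eq: "?P = (\<lambda>j. - 1 / complex_of_real ((\<mu> j)^2)) ` {0..d}" by auto
    show ?thesis unfolding eq by (intro finite_imageI) simp
  qed
  obtain \<delta> where \<delta>: "\<delta> > 0" "\<And>x. x \<in> ?P \<Longrightarrow> x \<noteq> z0 \<Longrightarrow> \<delta> \<le> dist z0 x"
    using finite_set_avoid[OF fin, of z0] by blast
  have "cball z0 (\<delta>/2) \<inter> UHP \<subseteq> Sset d \<mu>"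
  proof
    fix z assume z: "z \<in> cball z0 (\<delta>/2) \<inter> UHP"
    have "z \<notin> ?P"
    proof
      assume zP: "z \<in> ?P"
      have "z0 \<notin> ?P" using z0 by (simp add: Sset_def)
      then have "z \<noteq> z0" using zP by auto
      then have "\<delta> \<le> dist z0 z" using \<delta>(2)[OF zP] by simp
      moreover have "dist z0 z \<le> \<delta>/2" using z by simp
      ultimately show False using \<delta>(1) by simp
    qed
    then show "z \<in> Sset d \<mu>" using z by (simp add: Sset_def UHP_def)
  qed
  then show ?thesis using \<delta>(1) by (intro exI[of _ "\<delta>/2"]) auto
qed

lemma compact_UHP_cball: "compact (cball z0 r \<inter> UHP)"
  unfolding UHP_def by (intro compact_Int_closed compact_cball closed_halfspace_Im_ge)

lemma cont_final:
  assumes mu_nz: "\<forall>j\<in>{0..d}. \<mu> j \<noteq> 0"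
  shows "continuous_on (Sset d \<mu>) (Ifun d \<mu>)"
  unfolding continuous_on_eq_continuous_within
proof
  fix z0 assume z0: "z0 \<in> Sset d \<mu>"
  obtain r where r: "r > 0" "cball z0 r \<inter> UHP \<subseteq> Sset d \<mu>" using avoid[OF z0] by blast
  let ?N = "cball z0 r \<inter> UHP"
  have "continuous_on ?N (Ifun d \<mu>)"
  proof (rule uniform_limit_theorem[OF _ unif[OF mu_nz compact_UHP_cball r(2)]])
    show "\<forall>\<^sub>F B in at_top. continuous_on ?N (\<lambda>z. integral {0..B} (Iintegrand d \<mu> z))"
      by (intro always_eventually allI continuous_on_subset[OF cont_param]) auto
  qed simp
  moreover have "z0 \<in> ?N" using r z0 by (auto simp: Sset_def UHP_def)
  ultimately have c: "continuous (at z0 within ?N) (Ifun d \<mu>)"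
    by (simp add: continuous_on_eq_continuous_within)
  have "at z0 within Sset d \<mu> = at z0 within (Sset d \<mu> \<inter> ball z0 r)"
    by (rule at_within_nhd[of _ "ball z0 r"]) (use r in auto)
  moreover have "continuous (at z0 within (Sset d \<mu> \<inter> ball z0 r)) (Ifun d \<mu>)"
    by (rule continuous_within_subset[OF c]) (auto simp: Sset_def UHP_def)
  ultimately show "continuous (at z0 within Sset d \<mu>) (Ifun d \<mu>)" by (simp add: continuous_within)
qed

lemma ana_final:
  assumes mu_nz: "\<forall>j\<in>{0..d}. \<mu> j \<noteq> 0"
  shows "Ifun d \<mu> analytic_on {z. Im z > 0}"
  unfolding analytic_on_def
proof
  fix z0 :: complex assume "z0 \<in> {z. Im z > 0}"
  then have im: "Im z0 > 0" by simp
  then have z0: "z0 \<in> Sset d \<mu>" by (auto simp: Sset_def)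
  obtain r0 where r0: "r0 > 0" "cball z0 r0 \<inter> UHP \<subseteq> Sset d \<mu>" using avoid[OF z0] by blast
  define r where "r = min r0 (Im z0 / 2)"
  have rpos: "r > 0" using r0 im by (simp add: r_def)
  have pos: "Im z > 0" if "z \<in> cball z0 r" for z
  proof -
    have "\<bar>Im z0 - Im z\<bar> \<le> dist z0 z" unfolding dist_norm using abs_Im_le_cmod[of "z0 - z"] by simp
    also have "\<dots> \<le> Im z0 / 2" using that by (simp add: r_def)
    finally show ?thesis using im by linarith
  qed
  have sub: "cball z0 r \<subseteq> Sset d \<mu>"
  proof
    fix z assume z: "z \<in> cball z0 r"
    then have "z \<in> cball z0 r0 \<inter> UHP" using pos[OF z] by (auto simp: r_def UHP_def)
    then show "z \<in> Sset d \<mu>" using r0 by auto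
  qed
  have ul: "uniform_limit (cball z0 r) (\<lambda>B z. integral {0..B} (Iintegrand d \<mu> z)) (Ifun d \<mu>) at_top"
    by (rule unif[OF mu_nz compact_cball sub])
  have ev: "\<forall>\<^sub>F B in at_top. continuous_on (cball z0 r) (\<lambda>z. integral {0..B} (Iintegrand d \<mu> z))
           \<and> (\<lambda>z. integral {0..B} (Iintegrand d \<mu> z)) holomorphic_on ball z0 r"
  proof (intro always_eventually allI conjI)
    fix B :: real
    show "continuous_on (cball z0 r) (\<lambda>z. integral {0..B} (Iintegrand d \<mu> z))"
      by (rule continuous_on_subset[OF cont_param]) (use pos in \<open>force simp: UHP_def\<close>)
    show "(\<lambda>z. integral {0..B} (Iintegrand d \<mu> z)) holomorphic_on ball z0 r"
      by (rule holo_param) (use pos in auto)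
  qed
  obtain "Ifun d \<mu> holomorphic_on ball z0 r"
    by (rule holomorphic_uniform_limit[OF ev ul]) simp
  then show "\<exists>e>0. Ifun d \<mu> holomorphic_on ball z0 e" using rpos by blast
qed

theorem mainTheorem9:
  fixes d :: nat and \<mu> :: "nat \<Rightarrow> real"
  assumes mu_nz: "\<forall>j\<in>{0..d}. \<mu> j \<noteq> 0"
  defines "S \<equiv> {z::complex. Im z \<ge> 0} - {- 1 / complex_of_real ((\<mu> j)^2) | j. j \<in> {0..d}}"
  shows
   "(\<forall>z\<in>S.
      (\<forall>B. Iintegrand d \<mu> z integrable_on {0..B}) \<and>
      ((\<lambda>B. integral {0..B} (Iintegrand d \<mu> z)) \<longlongrightarrow> Ifun d \<mu> z) at_top \<and>
      (\<forall>A::real. A > 0 \<longrightarrow>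
         (\<lambda>x. PhiProd d \<mu> {} z (sqrt x) * exp (- (omega^2 * complex_of_real x) / 2)
                / complex_of_real (x powr (3/2))) absolutely_integrable_on {A^2..} \<and>
         (\<forall>l\<in>{0..d}.
           (\<lambda>x. PhiProd d \<mu> {l} z (sqrt x) * complex_of_real (1 / x^2)
                * exp (- (omega^2 * complex_of_real x / 2) * (1 + complex_of_real ((\<mu> l)^2) * z)))
             absolutely_integrable_on {A^2..}) \<and>
         (\<forall>l1\<in>{0..d}. \<forall>l2\<in>{0..d}. l1 \<noteq> l2 \<longrightarrow>
           (\<lambda>x. PhiProd d \<mu> {l1, l2} z (sqrt x) / complex_of_real (x powr (3/2))
                * exp (- (omega^2 * complex_of_real x / 2)
                        * (1 + complex_of_real ((\<mu> l1)^2) * z + complex_of_real ((\<mu> l2)^2) * z)))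
             absolutely_integrable_on {A^2..}) \<and>
         Ifun d \<mu> z =
             integral {0..A} (Iintegrand d \<mu> z)
           + 1 / (complex_of_real A * omega) * PhiProd d \<mu> {} z A
               * exp (- (omega^2 * complex_of_real (A^2)) / 2)
           - 1 / (2 * omega) *
               integral {A^2..} (\<lambda>x. PhiProd d \<mu> {} z (sqrt x)
                  * exp (- (omega^2 * complex_of_real x) / 2) / complex_of_real (x powr (3/2)))
           + (\<Sum>l\<in>{0..d}.
               complex_of_real (\<mu> l) * csqrt z
                 / (complex_of_real (sqrt (2*pi)) * omega^2 * (1 + complex_of_real ((\<mu> l)^2) * z))
               * PhiProd d \<mu> {l} z A * complex_of_real (1 / A^2)
               * exp (- (omega^2 * complex_of_real (A^2) / 2) * (1 + complex_of_real ((\<mu> l)^2) * z)))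
           - (\<Sum>l\<in>{0..d}.
               complex_of_real (\<mu> l) * csqrt z
                 / (complex_of_real (sqrt (2*pi)) * omega^2 * (1 + complex_of_real ((\<mu> l)^2) * z))
               * integral {A^2..} (\<lambda>x. PhiProd d \<mu> {l} z (sqrt x) * complex_of_real (1 / x^2)
                  * exp (- (omega^2 * complex_of_real x / 2) * (1 + complex_of_real ((\<mu> l)^2) * z))))
           + (\<Sum>l1\<in>{0..d}. \<Sum>l2\<in>{0..d} - {l1}.
               complex_of_real (\<mu> l1 * \<mu> l2) * z
                 / (complex_of_real (4 * pi) * omega * (1 + complex_of_real ((\<mu> l1)^2) * z))
               * integral {A^2..} (\<lambda>x. PhiProd d \<mu> {l1, l2} z (sqrt x) / complex_of_real (x powr (3/2))
                  * exp (- (omega^2 * complex_of_real x / 2)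
                          * (1 + complex_of_real ((\<mu> l1)^2) * z + complex_of_real ((\<mu> l2)^2) * z))))))
    \<and> continuous_on S (Ifun d \<mu>)
    \<and> Ifun d \<mu> analytic_on {z. Im z > 0}"
proof -
  have SS: "S = Sset d \<mu>" unfolding S_def Sset_def ..
  have partA: "\<forall>z\<in>S.
      (\<forall>B. Iintegrand d \<mu> z integrable_on {0..B}) \<and>
      ((\<lambda>B. integral {0..B} (Iintegrand d \<mu> z)) \<longlongrightarrow> Ifun d \<mu> z) at_top \<and>
      (\<forall>A::real. A > 0 \<longrightarrow>
         h0 d \<mu> z absolutely_integrable_on {A^2..} \<and>
         (\<forall>l\<in>{0..d}. h1 d \<mu> z l absolutely_integrable_on {A^2..}) \<and>
         (\<forall>l1\<in>{0..d}. \<forall>l2\<in>{0..d}. l1 \<noteq> l2 \<longrightarrow> h2 d \<mu> z l1 l2 absolutely_integrable_on {A^2..}) \<and>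
         Ifun d \<mu> z = Rstmt d \<mu> z A)"
  proof
    fix z assume "z \<in> S"
    then have zS: "z \<in> Sset d \<mu>" using SS by simp
    note zp = Sset_props[OF mu_nz zS]
    have Ieq: "Ifun d \<mu> z = Rf d \<mu> z A" if "A > 0" for A
      by (rule Ifun_eq[where d=d and \<mu>=\<mu> and z=z]) (use zp that in auto)
    have I1: "Ifun d \<mu> z = Rf d \<mu> z 1" by (rule Ieq) simp
    show "(\<forall>B. Iintegrand d \<mu> z integrable_on {0..B}) \<and>
      ((\<lambda>B. integral {0..B} (Iintegrand d \<mu> z)) \<longlongrightarrow> Ifun d \<mu> z) at_top \<and>
      (\<forall>A::real. A > 0 \<longrightarrow>
         h0 d \<mu> z absolutely_integrable_on {A^2..} \<and>
         (\<forall>l\<in>{0..d}. h1 d \<mu> z l absolutely_integrable_on {A^2..}) \<and>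
         (\<forall>l1\<in>{0..d}. \<forall>l2\<in>{0..d}. l1 \<noteq> l2 \<longrightarrow> h2 d \<mu> z l1 l2 absolutely_integrable_on {A^2..}) \<and>
         Ifun d \<mu> z = Rstmt d \<mu> z A)"
    proof (intro conjI allI impI ballI)
      show "Iintegrand d \<mu> z integrable_on {0..B}" for B by (rule integrable_f)
      show "((\<lambda>B. integral {0..B} (Iintegrand d \<mu> z)) \<longlongrightarrow> Ifun d \<mu> z) at_top"
        unfolding I1 by (rule conv_a[where d=d and \<mu>=\<mu> and z=z]) (use zp in auto)
      fix A :: real assume A: "A > 0"
      then have A2: "A^2 > 0" by simp
      show "h0 d \<mu> z absolutely_integrable_on {A^2..}" by (rule tail_h0(1)[OF zp(1) A2])
      show "h1 d \<mu> z l absolutely_integrable_on {A^2..}" for l by (rule tail_h1(1)[OF zp(1) A2])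
      show "h2 d \<mu> z l1 l2 absolutely_integrable_on {A^2..}" for l1 l2 by (rule tail_h2(1)[OF zp(1) A2])
      show "Ifun d \<mu> z = Rstmt d \<mu> z A"
        using Ieq[OF A] Rstmt_eq[OF A, of d \<mu> z] by simp
    qed
  qed
  have c: "continuous_on S (Ifun d \<mu>)" unfolding SS by (rule cont_final[OF mu_nz])
  have a: "Ifun d \<mu> analytic_on {z. Im z > 0}" by (rule ana_final[OF mu_nz])
  show ?thesis
    using partA c a unfolding h0_def[abs_def] h1_def[abs_def] h2_def[abs_def] Rstmt_def
    by (intro conjI) assumption+
qed

end
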